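(* Let $G$ be a finitely generated group which is either a free product $G=H*_F K$ of finitely generated groups $H$ and $K$ amalgamating finite subgroups of $H$ and $K$, or an HNN extension with finitely generated base group $H$ and two finite associated subgroups of $H$. Then there is a finite generating set $S_H$ of $H$, closed under inverses, and a finite generating set $S_G\supseteq S_H$ of $G$, closed under inverses, such that $d_H(h_1,h_2)=d_G(h_1,h_2)$ for all $h_1,h_2\in H$, where $d_H$ and $d_G$ are the word metrics with respect to $S_H$ and $S_G$ respectively.
   Context: For a group $X$ with finite generating set $T$ closed under inverses, the word metric is $d(x,x')$ = length of a shortest word in $T$ representing $x^{-1}x'$. *)

theory Defs
  imports "HOL-Algebra.Algebra"
begin

definition word_prod :: "('g,'b) monoid_scheme \<Rightarrow> 'g list \<Rightarrow> 'g" where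
  "word_prod G ws = foldr (\<lambda>s acc. s \<otimes>\<^bsub>G\<^esub> acc) ws \<one>\<^bsub>G\<^esub>"

definition word_dist :: "('g,'b) monoid_scheme \<Rightarrow> 'g set \<Rightarrow> 'g \<Rightarrow> 'g \<Rightarrow> nat" where
  "word_dist G S x y =
     (LEAST n. \<exists>ws. length ws = n \<and> set ws \<subseteq> S \<and> word_prod G ws = inv\<^bsub>G\<^esub> x \<otimes>\<^bsub>G\<^esub> y)"

definition finitely_generated :: "('g,'b) monoid_scheme \<Rightarrow> bool" where
  "finitely_generated G \<longleftrightarrow> (\<exists>S. finite S \<and> S \<subseteq> carrier G \<and> generate G S = carrier G)"

inductive cong_gen :: "('x list \<Rightarrow> 'x list \<Rightarrow> bool) \<Rightarrow> 'x list \<Rightarrow> 'x list \<Rightarrow> bool"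
  for R where
  base: "R u v \<Longrightarrow> cong_gen R u v"
| refl: "cong_gen R u u"
| sym: "cong_gen R u v \<Longrightarrow> cong_gen R v u"
| trans: "cong_gen R u v \<Longrightarrow> cong_gen R v w \<Longrightarrow> cong_gen R u w"
| ctxt: "cong_gen R u v \<Longrightarrow> cong_gen R (x @ u @ y) (x @ v @ y)"

definition pres_class :: "'x set \<Rightarrow> ('x list \<Rightarrow> 'x list \<Rightarrow> bool) \<Rightarrow> 'x list \<Rightarrow> 'x list set" where
  "pres_class Y R u = {v \<in> lists Y. cong_gen R u v}"

definition presented :: "'x set \<Rightarrow> ('x list \<Rightarrow> 'x list \<Rightarrow> bool) \<Rightarrow> ('x list set) monoid" where
  "presented Y R =
    \<lparr> partial_object.carrier = pres_class Y R ` lists Y,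
      monoid.mult = (\<lambda>P Q. {w \<in> lists Y. \<exists>u\<in>P. \<exists>v\<in>Q. cong_gen R (u @ v) w}),
      monoid.one = pres_class Y R [] \<rparr>"

definition amalg_gens :: "('a,'c) monoid_scheme \<Rightarrow> ('k,'d) monoid_scheme \<Rightarrow> ('a + 'k) set" where
  "amalg_gens H K = Inl ` carrier H \<union> Inr ` carrier K"

definition amalg_rel :: "('a,'c) monoid_scheme \<Rightarrow> ('k,'d) monoid_scheme \<Rightarrow> 'a set \<Rightarrow> ('a \<Rightarrow> 'k)
    \<Rightarrow> ('a + 'k) list \<Rightarrow> ('a + 'k) list \<Rightarrow> bool" where
  "amalg_rel H K A \<phi> u v \<longleftrightarrow>
     (\<exists>a\<in>carrier H. \<exists>b\<in>carrier H. u = [Inl a, Inl b] \<and> v = [Inl (a \<otimes>\<^bsub>H\<^esub> b)])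
   \<or> (u = [Inl \<one>\<^bsub>H\<^esub>] \<and> v = [])
   \<or> (\<exists>a\<in>carrier K. \<exists>b\<in>carrier K. u = [Inr a, Inr b] \<and> v = [Inr (a \<otimes>\<^bsub>K\<^esub> b)])
   \<or> (u = [Inr \<one>\<^bsub>K\<^esub>] \<and> v = [])
   \<or> (\<exists>a\<in>A. u = [Inl a] \<and> v = [Inr (\<phi> a)])"

definition amalg :: "('a,'c) monoid_scheme \<Rightarrow> ('k,'d) monoid_scheme \<Rightarrow> 'a set \<Rightarrow> ('a \<Rightarrow> 'k)
    \<Rightarrow> (('a + 'k) list set) monoid" where
  "amalg H K A \<phi> = presented (amalg_gens H K) (amalg_rel H K A \<phi>)"

definition amalg_incl :: "('a,'c) monoid_scheme \<Rightarrow> ('k,'d) monoid_scheme \<Rightarrow> 'a set \<Rightarrow> ('a \<Rightarrow> 'k)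
    \<Rightarrow> 'a \<Rightarrow> ('a + 'k) list set" where
  "amalg_incl H K A \<phi> h = pres_class (amalg_gens H K) (amalg_rel H K A \<phi>) [Inl h]"

text \<open>Generators: elements of H (Inl), stable letter t = Inr True, t^{-1} = Inr False.
  Relations: multiplication table of H, t t^{-1} = 1 = t^{-1} t, and t^{-1} a t = phi a.\<close>
definition hnn_gens :: "('a,'c) monoid_scheme \<Rightarrow> ('a + bool) set" where
  "hnn_gens H = Inl ` carrier H \<union> Inr ` UNIV"

definition hnn_rel :: "('a,'c) monoid_scheme \<Rightarrow> 'a set \<Rightarrow> ('a \<Rightarrow> 'a)
    \<Rightarrow> ('a + bool) list \<Rightarrow> ('a + bool) list \<Rightarrow> bool" where
  "hnn_rel H A \<phi> u v \<longleftrightarrow>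
     (\<exists>a\<in>carrier H. \<exists>b\<in>carrier H. u = [Inl a, Inl b] \<and> v = [Inl (a \<otimes>\<^bsub>H\<^esub> b)])
   \<or> (u = [Inl \<one>\<^bsub>H\<^esub>] \<and> v = [])
   \<or> (u = [Inr True, Inr False] \<and> v = [])
   \<or> (u = [Inr False, Inr True] \<and> v = [])
   \<or> (\<exists>a\<in>A. u = [Inr False, Inl a, Inr True] \<and> v = [Inl (\<phi> a)])"

definition hnn :: "('a,'c) monoid_scheme \<Rightarrow> 'a set \<Rightarrow> ('a \<Rightarrow> 'a) \<Rightarrow> (('a + bool) list set) monoid" where
  "hnn H A \<phi> = presented (hnn_gens H) (hnn_rel H A \<phi>)"

definition hnn_incl :: "('a,'c) monoid_scheme \<Rightarrow> 'a set \<Rightarrow> ('a \<Rightarrow> 'a) \<Rightarrow> 'a \<Rightarrow> ('a + bool) list set" where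
  "hnn_incl H A \<phi> h = pres_class (hnn_gens H) (hnn_rel H A \<phi>) [Inl h]"

end

theory Submission
  imports Defs
begin

lemma cong_app:
  assumes "cong_gen R u u'" "cong_gen R v v'"
  shows "cong_gen R (u @ v) (u' @ v')"
proof -
  have "cong_gen R ([] @ u @ v) ([] @ u' @ v)" by (rule cong_gen.ctxt[OF assms(1)])
  moreover have "cong_gen R (u' @ v @ []) (u' @ v' @ [])" by (rule cong_gen.ctxt[OF assms(2)])
  ultimately show ?thesis by (auto intro: cong_gen.trans)
qed

lemma cong_lists:
  assumes "cong_gen R u v" "\<And>u v. R u v \<Longrightarrow> u \<in> lists Y \<and> v \<in> lists Y"
  shows "u \<in> lists Y \<longleftrightarrow> v \<in> lists Y"
  using assms(1) by induction (use assms(2) in auto)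

lemma cls_eq_iff:
  assumes "u \<in> lists Y" "v \<in> lists Y"
  shows "pres_class Y R u = pres_class Y R v \<longleftrightarrow> cong_gen R u v"
proof
  assume "pres_class Y R u = pres_class Y R v"
  moreover have "v \<in> pres_class Y R v" using assms by (auto simp: pres_class_def intro: cong_gen.refl)
  ultimately show "cong_gen R u v" by (auto simp: pres_class_def)
next
  assume "cong_gen R u v"
  then show "pres_class Y R u = pres_class Y R v"
    by (auto simp: pres_class_def intro: cong_gen.trans cong_gen.sym)
qed

lemma presented_carrier: "carrier (presented Y R) = pres_class Y R ` lists Y"
  by (simp add: presented_def)

lemma presented_one: "\<one>\<^bsub>presented Y R\<^esub> = pres_class Y R []"
  by (simp add: presented_def)

lemma presented_mult:
  assumes "u \<in> lists Y" "v \<in> lists Y"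
  shows "pres_class Y R u \<otimes>\<^bsub>presented Y R\<^esub> pres_class Y R v = pres_class Y R (u @ v)"
proof -
  have "{w \<in> lists Y. \<exists>u'\<in>pres_class Y R u. \<exists>v'\<in>pres_class Y R v. cong_gen R (u' @ v') w}
        = pres_class Y R (u @ v)"
  proof (intro Set.set_eqI iffI)
    fix w assume "w \<in> {w \<in> lists Y. \<exists>u'\<in>pres_class Y R u. \<exists>v'\<in>pres_class Y R v. cong_gen R (u' @ v') w}"
    then obtain u' v' where "w \<in> lists Y" "cong_gen R u u'" "cong_gen R v v'" "cong_gen R (u' @ v') w"
      by (auto simp: pres_class_def)
    then show "w \<in> pres_class Y R (u @ v)"
      by (auto simp: pres_class_def intro: cong_gen.trans cong_app)
  next
    fix w assume "w \<in> pres_class Y R (u @ v)"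
    moreover have "u \<in> pres_class Y R u" "v \<in> pres_class Y R v"
      using assms by (auto simp: pres_class_def intro: cong_gen.refl)
    ultimately show "w \<in> {w \<in> lists Y. \<exists>u'\<in>pres_class Y R u. \<exists>v'\<in>pres_class Y R v. cong_gen R (u' @ v') w}"
      by (auto simp: pres_class_def)
  qed
  then show ?thesis by (simp add: presented_def)
qed

lemma presented_monoid: "monoid (presented Y R)"
proof (rule monoidI)
  fix x y assume "x \<in> carrier (presented Y R)" "y \<in> carrier (presented Y R)"
  then obtain u v where "u \<in> lists Y" "v \<in> lists Y" "x = pres_class Y R u" "y = pres_class Y R v"
    by (auto simp: presented_carrier)
  then show "x \<otimes>\<^bsub>presented Y R\<^esub> y \<in> carrier (presented Y R)"
    by (simp add: presented_mult presented_carrier)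
next
  show "\<one>\<^bsub>presented Y R\<^esub> \<in> carrier (presented Y R)"
    by (simp add: presented_one presented_carrier)
next
  fix x y z assume "x \<in> carrier (presented Y R)" "y \<in> carrier (presented Y R)" "z \<in> carrier (presented Y R)"
  then obtain u v w where "u \<in> lists Y" "v \<in> lists Y" "w \<in> lists Y"
    "x = pres_class Y R u" "y = pres_class Y R v" "z = pres_class Y R w"
    by (auto simp: presented_carrier)
  then show "x \<otimes>\<^bsub>presented Y R\<^esub> y \<otimes>\<^bsub>presented Y R\<^esub> z = x \<otimes>\<^bsub>presented Y R\<^esub> (y \<otimes>\<^bsub>presented Y R\<^esub> z)"
    by (simp add: presented_mult)
next
  fix x assume "x \<in> carrier (presented Y R)"
  then obtain u where "u \<in> lists Y" "x = pres_class Y R u" by (auto simp: presented_carrier)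
  then show "\<one>\<^bsub>presented Y R\<^esub> \<otimes>\<^bsub>presented Y R\<^esub> x = x" "x \<otimes>\<^bsub>presented Y R\<^esub> \<one>\<^bsub>presented Y R\<^esub> = x"
    using presented_mult[of "[]" Y u R] presented_mult[of u Y "[]" R] by (simp_all add: presented_one)
qed

lemma presented_group:
  assumes iv: "\<And>y. y \<in> Y \<Longrightarrow> iv y \<in> Y \<and> cong_gen R [iv y, y] []"
  shows "group (presented Y R)"
proof -
  interpret monoid "presented Y R" by (rule presented_monoid)
  have key: "u \<in> lists Y \<Longrightarrow> rev (map iv u) \<in> lists Y \<and> cong_gen R (rev (map iv u) @ u) []" for u
  proof (induction u)
    case Nil then show ?case by (auto intro: cong_gen.refl)
  next
    case (Cons y u)
    then have y: "y \<in> Y" "iv y \<in> Y" "cong_gen R [iv y, y] []" using iv by auto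
    have "cong_gen R (rev (map iv u) @ [iv y, y] @ u) (rev (map iv u) @ [] @ u)"
      by (rule cong_gen.ctxt[OF y(3)])
    with Cons y show ?case by (auto intro: cong_gen.trans)
  qed
  show ?thesis
  proof (rule group_l_invI)
    fix x assume "x \<in> carrier (presented Y R)"
    then obtain u where u: "u \<in> lists Y" "x = pres_class Y R u" by (auto simp: presented_carrier)
    with key[OF u(1)] show "\<exists>y\<in>carrier (presented Y R). y \<otimes>\<^bsub>presented Y R\<^esub> x = \<one>\<^bsub>presented Y R\<^esub>"
      by (intro bexI[of _ "pres_class Y R (rev (map iv u))"])
         (auto simp: presented_mult presented_one presented_carrier cls_eq_iff)
  qed
qed

lemma presented_inv:
  assumes iv: "\<And>y. y \<in> Y \<Longrightarrow> iv y \<in> Y \<and> cong_gen R [iv y, y] []" and y: "y \<in> Y"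
  shows "inv\<^bsub>presented Y R\<^esub> (pres_class Y R [y]) = pres_class Y R [iv y]"
proof -
  interpret group "presented Y R" by (rule presented_group[OF iv]) 
  show ?thesis
    by (rule inv_equality) (use iv[OF y] y in \<open>auto simp: presented_mult presented_one presented_carrier cls_eq_iff\<close>)
qed

lemma presented_word_prod:
  assumes "u \<in> lists Y"
  shows "word_prod (presented Y R) (map (\<lambda>y. pres_class Y R [y]) u) = pres_class Y R u"
  using assms
proof (induction u)
  case Nil then show ?case by (simp add: word_prod_def presented_one)
next
  case (Cons y u)
  then show ?case using presented_mult[of "[y]" Y u R] by (simp add: word_prod_def)
qed

lemma presented_generate:
  assumes "group (presented Y R)" "S \<subseteq> carrier (presented Y R)"
    and "\<And>y. y \<in> Y \<Longrightarrow> pres_class Y R [y] \<in> generate (presented Y R) S"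
  shows "generate (presented Y R) S = carrier (presented Y R)"
proof
  interpret group "presented Y R" by fact
  show "generate (presented Y R) S \<subseteq> carrier (presented Y R)" by (rule generate_incl[OF assms(2)])
  have "u \<in> lists Y \<Longrightarrow> pres_class Y R u \<in> generate (presented Y R) S" for u
  proof (induction u)
    case Nil then show ?case using generate.one[of "presented Y R" S] by (simp add: presented_one)
  next
    case (Cons y u)
    then show ?case using presented_mult[of "[y]" Y u R] generate.eng[OF assms(3), of y "pres_class Y R u"]
      by simp
  qed
  then show "carrier (presented Y R) \<subseteq> generate (presented Y R) S" by (auto simp: presented_carrier)
qed

lemma act_cong:
  assumes Rok: "\<And>u v. R u v \<Longrightarrow> u \<in> lists Y \<and> v \<in> lists Y"
    and invX: "\<And>y x. y \<in> Y \<Longrightarrow> x \<in> XS \<Longrightarrow> fa y x \<in> XS"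
    and Ract: "\<And>u v x. R u v \<Longrightarrow> x \<in> XS \<Longrightarrow> foldr fa u x = foldr fa v x"
    and c: "cong_gen R u v" and u: "u \<in> lists Y"
  shows "\<forall>x\<in>XS. foldr fa u x = foldr fa v x"
proof -
  have invw: "w \<in> lists Y \<Longrightarrow> x \<in> XS \<Longrightarrow> foldr fa w x \<in> XS" for w x
    by (induction w) (auto intro: invX)
  from c u show ?thesis
  proof induction
    case (base u v) then show ?case using Ract by auto
  next
    case (refl u) then show ?case by simp
  next
    case (sym u v)
    then have "u \<in> lists Y" using cong_lists[OF sym.hyps Rok] sym.prems by blast
    with sym show ?case by auto
  next
    case (trans u v w)
    then have "v \<in> lists Y" using cong_lists[OF trans(1) Rok] by blast
    with trans show ?case by auto
  next
    case (ctxt u v x y)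
    then show ?case using invw by auto
  qed
qed

lemma word_prod_append:
  assumes "monoid H" "ss1 \<in> lists (carrier H)" "ss2 \<in> lists (carrier H)"
  shows "word_prod H (ss1 @ ss2) = word_prod H ss1 \<otimes>\<^bsub>H\<^esub> word_prod H ss2"
proof -
  interpret monoid H by fact
  have c: "ss \<in> lists (carrier H) \<Longrightarrow> word_prod H ss \<in> carrier H" for ss
    by (induction ss) (auto simp: word_prod_def)
  show ?thesis using assms(2,3)
    by (induction ss1) (auto simp: word_prod_def m_assoc c[unfolded word_prod_def])
qed

lemma word_prod_carrier:
  assumes "monoid H" "ss \<in> lists (carrier H)"
  shows "word_prod H ss \<in> carrier H"
proof -
  interpret monoid H by fact
  show ?thesis using assms(2) by (induction ss) (auto simp: word_prod_def)
qed

lemma gen_word: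
  assumes "group H" "S \<subseteq> carrier H" "\<forall>s\<in>S. inv\<^bsub>H\<^esub> s \<in> S" "h \<in> generate H S"
  shows "\<exists>ss\<in>lists S. word_prod H ss = h"
  using assms(4)
proof induction
  case one then show ?case by (intro bexI[of _ "[]"]) (auto simp: word_prod_def)
next
  case (incl h) then show ?case using assms(1,2) 
    by (intro bexI[of _ "[h]"]) (auto simp: word_prod_def group.is_monoid monoid.r_one)
next
  case (inv h) then show ?case using assms(1,2,3)
    by (intro bexI[of _ "[inv\<^bsub>H\<^esub> h]"]) (auto simp: word_prod_def group.is_monoid monoid.r_one group.inv_closed)
next
  case (eng h1 h2)
  then obtain s1 s2 where "s1 \<in> lists S" "s2 \<in> lists S" "word_prod H s1 = h1" "word_prod H s2 = h2" by auto
  then show ?case using assms(1,2) word_prod_append[of H s1 s2]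
    by (intro bexI[of _ "s1 @ s2"]) (auto simp: group.is_monoid)
qed

lemma word_dist_le:
  assumes "ss \<in> lists S" "word_prod H ss = inv\<^bsub>H\<^esub> x \<otimes>\<^bsub>H\<^esub> y"
  shows "word_dist H S x y \<le> length ss"
  unfolding word_dist_def by (rule Least_le) (use assms in auto)

lemma word_dist_ex:
  assumes "group H" "S \<subseteq> carrier H" "\<forall>s\<in>S. inv\<^bsub>H\<^esub> s \<in> S" "generate H S = carrier H"
    "x \<in> carrier H" "y \<in> carrier H"
  shows "\<exists>ss. length ss = word_dist H S x y \<and> set ss \<subseteq> S \<and> word_prod H ss = inv\<^bsub>H\<^esub> x \<otimes>\<^bsub>H\<^esub> y"
proof -
  have "inv\<^bsub>H\<^esub> x \<otimes>\<^bsub>H\<^esub> y \<in> generate H S" using assms by (simp add: group.inv_closed group.is_monoid monoid.m_closed)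
  then obtain ss where "ss \<in> lists S" "word_prod H ss = inv\<^bsub>H\<^esub> x \<otimes>\<^bsub>H\<^esub> y" using gen_word[OF assms(1-3)] by blast
  then have "\<exists>n ss. length ss = n \<and> set ss \<subseteq> S \<and> word_prod H ss = inv\<^bsub>H\<^esub> x \<otimes>\<^bsub>H\<^esub> y" by auto
  then show ?thesis unfolding word_dist_def by (rule LeastI_ex)
qed

lemma transfer_dist:
  assumes H: "group H" and G: "group G"
    and S: "S \<subseteq> carrier H" "\<forall>s\<in>S. inv\<^bsub>H\<^esub> s \<in> S" "generate H S = carrier H"
    and hom: "\<iota> \<in> hom H G"
    and SG: "\<iota> ` S \<subseteq> SG"
    and LB: "\<And>ws h. ws \<in> lists SG \<Longrightarrow> h \<in> carrier H \<Longrightarrow> word_prod G ws = \<iota> h \<Longrightarrow>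
               \<exists>ss\<in>lists S. length ss \<le> length ws \<and> word_prod H ss = h"
    and h1: "h1 \<in> carrier H" and h2: "h2 \<in> carrier H"
  shows "word_dist H S h1 h2 = word_dist G SG (\<iota> h1) (\<iota> h2)"
proof -
  interpret gh: group_hom H G \<iota> using H G hom by (simp add: group_hom_def group_hom_axioms_def)
  have wp: "ss \<in> lists (carrier H) \<Longrightarrow> word_prod G (map \<iota> ss) = \<iota> (word_prod H ss)" for ss
    by (induction ss) (auto simp: word_prod_def word_prod_carrier[OF gh.G.is_monoid, unfolded word_prod_def])
  have tgt: "inv\<^bsub>G\<^esub> (\<iota> h1) \<otimes>\<^bsub>G\<^esub> \<iota> h2 = \<iota> (inv\<^bsub>H\<^esub> h1 \<otimes>\<^bsub>H\<^esub> h2)"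
    using h1 h2 by simp
  obtain ss where ss: "length ss = word_dist H S h1 h2" "set ss \<subseteq> S" "word_prod H ss = inv\<^bsub>H\<^esub> h1 \<otimes>\<^bsub>H\<^esub> h2"
    using word_dist_ex[OF H S h1 h2] by blast
  show ?thesis unfolding word_dist_def[of G]
  proof (rule Least_equality[symmetric])
    show "\<exists>ws. length ws = word_dist H S h1 h2 \<and> set ws \<subseteq> SG \<and> word_prod G ws = inv\<^bsub>G\<^esub> \<iota> h1 \<otimes>\<^bsub>G\<^esub> \<iota> h2"
      using ss SG S(1) by (intro exI[of _ "map \<iota> ss"]) (use wp[of ss] in \<open>auto simp: tgt subset_iff\<close>)
  next
    fix n assume "\<exists>ws. length ws = n \<and> set ws \<subseteq> SG \<and> word_prod G ws = inv\<^bsub>G\<^esub> \<iota> h1 \<otimes>\<^bsub>G\<^esub> \<iota> h2"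
    then obtain ws where ws: "length ws = n" "ws \<in> lists SG" "word_prod G ws = \<iota> (inv\<^bsub>H\<^esub> h1 \<otimes>\<^bsub>H\<^esub> h2)"
      by (auto simp: tgt)
    obtain ss' where "ss' \<in> lists S" "length ss' \<le> length ws" "word_prod H ss' = inv\<^bsub>H\<^esub> h1 \<otimes>\<^bsub>H\<^esub> h2"
      using LB[OF ws(2) _ ws(3)] h1 h2 by auto
    then show "word_dist H S h1 h2 \<le> n" using word_dist_le[of ss' S H h1 h2] ws(1) by simp
  qed
qed

definition rc :: "('g,'b) monoid_scheme \<Rightarrow> 'g set \<Rightarrow> 'g \<Rightarrow> 'g set" where
  "rc G C h = (\<lambda>c. c \<otimes>\<^bsub>G\<^esub> h) ` C"

definition rep :: "('g,'b) monoid_scheme \<Rightarrow> 'g set \<Rightarrow> 'g \<Rightarrow> 'g" where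
  "rep G C h = (if h \<in> C then \<one>\<^bsub>G\<^esub> else (SOME r. r \<in> rc G C h))"

definition part :: "('g,'b) monoid_scheme \<Rightarrow> 'g set \<Rightarrow> 'g \<Rightarrow> 'g" where
  "part G C h = h \<otimes>\<^bsub>G\<^esub> inv\<^bsub>G\<^esub> (rep G C h)"

locale tv = group G for G (structure) + fixes C assumes sub: "subgroup C G"
begin

lemma C_carr: "C \<subseteq> carrier G" by (rule subgroup.subset[OF sub])
lemma C_one: "\<one> \<in> C" by (rule subgroup.one_closed[OF sub])
lemma C_mult: "a \<in> C \<Longrightarrow> b \<in> C \<Longrightarrow> a \<otimes> b \<in> C" by (rule subgroup.m_closed[OF sub])
lemma C_inv: "a \<in> C \<Longrightarrow> inv a \<in> C" by (rule subgroup.m_inv_closed[OF sub])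

lemma rc_mult: assumes "c \<in> C" "h \<in> carrier G" shows "rc G C (c \<otimes> h) = rc G C h"
proof (intro Set.set_eqI iffI)
  fix x assume "x \<in> rc G C (c \<otimes> h)"
  then obtain c2 where c2: "c2 \<in> C" "x = c2 \<otimes> (c \<otimes> h)" by (auto simp: rc_def)
  have cc: "c \<in> carrier G" "c2 \<in> carrier G" using assms c2 C_carr by auto
  have "x = (c2 \<otimes> c) \<otimes> h" using c2(2) cc assms(2) by (simp add: m_assoc)
  moreover have "c2 \<otimes> c \<in> C" using C_mult c2 assms by simp
  ultimately show "x \<in> rc G C h" unfolding rc_def by (rule image_eqI)
next
  fix x assume "x \<in> rc G C h"
  then obtain c2 where c2: "c2 \<in> C" "x = c2 \<otimes> h" by (auto simp: rc_def)
  have cc: "c \<in> carrier G" "c2 \<in> carrier G" using assms c2 C_carr by auto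
  have ih: "inv c \<otimes> (c \<otimes> h) = h" using cc assms(2) by (simp add: m_assoc[symmetric])
  have "c2 \<otimes> inv c \<otimes> (c \<otimes> h) = c2 \<otimes> (inv c \<otimes> (c \<otimes> h))"
    using cc assms(2) by (simp add: m_assoc)
  also have "\<dots> = x" using ih c2 by simp
  finally have "x = (c2 \<otimes> inv c) \<otimes> (c \<otimes> h)" by simp
  moreover have "c2 \<otimes> inv c \<in> C" using C_mult C_inv c2 assms by simp
  ultimately show "x \<in> rc G C (c \<otimes> h)" unfolding rc_def by (rule image_eqI)
qed

lemma rep_in: assumes "h \<in> carrier G" shows "\<exists>c\<in>C. rep G C h = c \<otimes> h"
proof (cases "h \<in> C")
  case True then show ?thesis using assms C_inv C_carr by (auto simp: rep_def intro!: bexI[of _ "inv h"])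
next
  case False
  have "h \<in> rc G C h" using C_one assms by (auto simp: rc_def intro!: image_eqI[of _ _ "\<one>"])
  then have "(SOME r. r \<in> rc G C h) \<in> rc G C h" by (rule someI)
  then show ?thesis using False by (auto simp: rep_def rc_def)
qed

lemma rep_carr: "h \<in> carrier G \<Longrightarrow> rep G C h \<in> carrier G"
  using rep_in C_carr by fastforce

lemma part_in: assumes "h \<in> carrier G" shows "part G C h \<in> C"
proof -
  obtain c where c: "c \<in> C" "rep G C h = c \<otimes> h" using rep_in[OF assms] by blast
  have "part G C h = h \<otimes> (inv h \<otimes> inv c)" using c assms C_carr by (simp add: part_def inv_mult_group subsetD)
  also have "\<dots> = inv c" using c assms C_carr by (simp add: m_assoc[symmetric] subsetD)
  finally show ?thesis using C_inv c by simp
qed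

lemma part_carr: "h \<in> carrier G \<Longrightarrow> part G C h \<in> carrier G"
  using part_in C_carr by blast

lemma part_rep: assumes "h \<in> carrier G" shows "part G C h \<otimes> rep G C h = h"
  using assms rep_carr[OF assms] by (simp add: part_def m_assoc)

lemma rep_mult: assumes "c \<in> C" "h \<in> carrier G" shows "rep G C (c \<otimes> h) = rep G C h"
proof -
  have "c \<otimes> h \<in> C \<longleftrightarrow> h \<in> C"
  proof
    assume "c \<otimes> h \<in> C"
    then have "inv c \<otimes> (c \<otimes> h) \<in> C" using C_mult C_inv assms by blast
    moreover have "inv c \<otimes> (c \<otimes> h) = h" using assms C_carr by (simp add: m_assoc[symmetric] subsetD)
    ultimately show "h \<in> C" by simp
  qed (use assms C_mult in auto)
  then show ?thesis using rc_mult[OF assms] by (simp add: rep_def)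
qed

lemma rep_idem: assumes "h \<in> carrier G" shows "rep G C (rep G C h) = rep G C h"
proof -
  obtain c where c: "c \<in> C" "rep G C h = c \<otimes> h" using rep_in[OF assms] by blast
  then show ?thesis using rep_mult[OF c(1) assms] by simp
qed

lemma rep_one_iff: assumes "h \<in> carrier G" shows "rep G C h = \<one> \<longleftrightarrow> h \<in> C"
proof
  assume "rep G C h = \<one>"
  then have "part G C h = h" using assms by (simp add: part_def)
  then show "h \<in> C" using part_in[OF assms] by simp
qed (simp add: rep_def)

lemma rep_of_in: "h \<in> C \<Longrightarrow> rep G C h = \<one>" by (simp add: rep_def)
lemma part_of_in: "h \<in> C \<Longrightarrow> part G C h = h"
  using C_carr by (auto simp: part_def rep_def)

lemma decomp: assumes "c \<in> C" "r \<in> carrier G" "rep G C r = r"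
  shows "rep G C (c \<otimes> r) = r" "part G C (c \<otimes> r) = c"
proof -
  show 1: "rep G C (c \<otimes> r) = r" using rep_mult assms by simp
  show "part G C (c \<otimes> r) = c" using assms C_carr 1
    by (simp add: part_def m_assoc subsetD)
qed

end

fun startsL :: "('x + 'y) list \<Rightarrow> bool" where
  "startsL (Inl _ # _) = True" | "startsL _ = False"
fun startsR :: "('x + 'y) list \<Rightarrow> bool" where
  "startsR (Inr _ # _) = True" | "startsR _ = False"

locale amal =
  fixes H :: "('a,'c) monoid_scheme" and K :: "('k,'d) monoid_scheme"
    and A :: "'a set" and B :: "'k set" and \<phi> :: "'a \<Rightarrow> 'k"
  assumes grpH: "group H" and grpK: "group K" and subA: "subgroup A H" and subB: "subgroup B K"
    and iso: "\<phi> \<in> iso (H\<lparr>carrier := A\<rparr>) (K\<lparr>carrier := B\<rparr>)"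
begin

sublocale tA: tv H A by (simp add: tv_def tv_axioms_def grpH subA)
sublocale tB: tv K B by (simp add: tv_def tv_axioms_def grpK subB)

definition \<psi> :: "'k \<Rightarrow> 'a" where "\<psi> = inv_into A \<phi>"

lemma phi_B: "a \<in> A \<Longrightarrow> \<phi> a \<in> B"
  using iso by (auto simp: iso_def hom_def)
lemma phi_mult: "a \<in> A \<Longrightarrow> b \<in> A \<Longrightarrow> \<phi> (a \<otimes>\<^bsub>H\<^esub> b) = \<phi> a \<otimes>\<^bsub>K\<^esub> \<phi> b"
  using iso by (auto simp: iso_def hom_def)
lemma bij: "bij_betw \<phi> A B"
  using iso by (auto simp: iso_def)
lemma psi_A: "b \<in> B \<Longrightarrow> \<psi> b \<in> A"
  using bij unfolding \<psi>_def by (metis bij_betw_def inv_into_into)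
lemma phi_psi: "b \<in> B \<Longrightarrow> \<phi> (\<psi> b) = b"
  using bij unfolding \<psi>_def by (metis bij_betw_def f_inv_into_f)
lemma psi_phi: "a \<in> A \<Longrightarrow> \<psi> (\<phi> a) = a"
  using bij unfolding \<psi>_def by (metis bij_betw_def inv_into_f_f)
lemma phi_one: "\<phi> \<one>\<^bsub>H\<^esub> = \<one>\<^bsub>K\<^esub>"
proof -
  have "\<phi> \<one>\<^bsub>H\<^esub> \<otimes>\<^bsub>K\<^esub> \<phi> \<one>\<^bsub>H\<^esub> = \<phi> \<one>\<^bsub>H\<^esub> \<otimes>\<^bsub>K\<^esub> \<one>\<^bsub>K\<^esub>"
    using phi_mult[OF tA.C_one tA.C_one] phi_B[OF tA.C_one] tB.C_carr by auto
  then show ?thesis using phi_B[OF tA.C_one] tB.C_carr by (meson subsetD tB.l_cancel tB.one_closed)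
qed
lemma phi_carr: "a \<in> A \<Longrightarrow> \<phi> a \<in> carrier K" using phi_B tB.C_carr by blast
lemma A_carr: "a \<in> A \<Longrightarrow> a \<in> carrier H" using tA.C_carr by blast
lemma B_carr: "b \<in> B \<Longrightarrow> b \<in> carrier K" using tB.C_carr by blast

fun wfl :: "('a + 'k) list \<Rightarrow> bool" where
  "wfl [] = True"
| "wfl (Inl r # l) = (r \<in> carrier H \<and> rep H A r = r \<and> r \<noteq> \<one>\<^bsub>H\<^esub> \<and> \<not> startsL l \<and> wfl l)"
| "wfl (Inr r # l) = (r \<in> carrier K \<and> rep K B r = r \<and> r \<noteq> \<one>\<^bsub>K\<^esub> \<and> \<not> startsR l \<and> wfl l)"

definition XS :: "('a \<times> ('a + 'k) list) set" where
  "XS = {x. fst x \<in> A \<and> wfl (snd x)}"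

definition frontH :: "'a \<times> ('a + 'k) list \<Rightarrow> 'a \<times> ('a + 'k) list" where
  "frontH x = (case snd x of Inl r # l' \<Rightarrow> (fst x \<otimes>\<^bsub>H\<^esub> r, l') | _ \<Rightarrow> x)"
definition pushH :: "'a \<Rightarrow> ('a + 'k) list \<Rightarrow> 'a \<times> ('a + 'k) list" where
  "pushH p t = (part H A p, if rep H A p = \<one>\<^bsub>H\<^esub> then t else Inl (rep H A p) # t)"
definition actH :: "'a \<Rightarrow> 'a \<times> ('a + 'k) list \<Rightarrow> 'a \<times> ('a + 'k) list" where
  "actH h x = pushH (h \<otimes>\<^bsub>H\<^esub> fst (frontH x)) (snd (frontH x))"

definition frontK :: "'a \<times> ('a + 'k) list \<Rightarrow> 'k \<times> ('a + 'k) list" where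
  "frontK x = (case snd x of Inr r # l' \<Rightarrow> (\<phi> (fst x) \<otimes>\<^bsub>K\<^esub> r, l') | _ \<Rightarrow> (\<phi> (fst x), snd x))"
definition pushK :: "'k \<Rightarrow> ('a + 'k) list \<Rightarrow> 'a \<times> ('a + 'k) list" where
  "pushK q t = (\<psi> (part K B q), if rep K B q = \<one>\<^bsub>K\<^esub> then t else Inr (rep K B q) # t)"
definition actK :: "'k \<Rightarrow> 'a \<times> ('a + 'k) list \<Rightarrow> 'a \<times> ('a + 'k) list" where
  "actK k x = pushK (k \<otimes>\<^bsub>K\<^esub> fst (frontK x)) (snd (frontK x))"

fun act :: "'a + 'k \<Rightarrow> 'a \<times> ('a + 'k) list \<Rightarrow> 'a \<times> ('a + 'k) list" where
  "act (Inl h) x = actH h x" | "act (Inr k) x = actK k x"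

lemma XS_cases:
  assumes "x \<in> XS"
  obtains (Nil) a where "x = (a, [])" "a \<in> A"
   | (L) a r l where "x = (a, Inl r # l)" "a \<in> A" "r \<in> carrier H" "rep H A r = r" "r \<noteq> \<one>\<^bsub>H\<^esub>" "\<not> startsL l" "wfl l"
   | (R) a r l where "x = (a, Inr r # l)" "a \<in> A" "r \<in> carrier K" "rep K B r = r" "r \<noteq> \<one>\<^bsub>K\<^esub>" "\<not> startsR l" "wfl l"
proof -
  obtain a l where x: "x = (a, l)" by fastforce
  show ?thesis
  proof (cases l)
    case Nil then show ?thesis using that x assms by (auto simp: XS_def)
  next
    case (Cons y l')
    then show ?thesis using that x assms by (cases y) (auto simp: XS_def)
  qed
qed

lemma frontH_XS':
  assumes "x \<in> XS"
  shows "fst (frontH x) \<in> carrier H \<and> wfl (snd (frontH x)) \<and> \<not> startsL (snd (frontH x))"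
  using assms by (cases rule: XS_cases) (auto simp: frontH_def A_carr)
lemmas frontH_XS = frontH_XS'[THEN conjunct1] frontH_XS'[THEN conjunct2, THEN conjunct1]
  frontH_XS'[THEN conjunct2, THEN conjunct2]

lemma pushH_XS:
  assumes "p \<in> carrier H" "wfl t" "\<not> startsL t"
  shows "pushH p t \<in> XS"
  using assms tA.part_in[OF assms(1)] tA.rep_idem[OF assms(1)] tA.rep_carr[OF assms(1)]
  by (auto simp: pushH_def XS_def)

lemma frontH_pushH:
  assumes "p \<in> carrier H" "\<not> startsL t"
  shows "frontH (pushH p t) = (p, t)"
proof (cases "rep H A p = \<one>\<^bsub>H\<^esub>")
  case True
  then have "p \<in> A" using tA.rep_one_iff[OF assms(1)] by simp
  then show ?thesis using True assms tA.part_of_in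
    by (cases t rule: startsL.cases) (auto simp: pushH_def frontH_def)
next
  case False
  then show ?thesis using tA.part_rep[OF assms(1)] by (simp add: pushH_def frontH_def)
qed

lemma pushH_frontH:
  assumes "x \<in> XS"
  shows "pushH (fst (frontH x)) (snd (frontH x)) = x"
  using assms
proof (cases rule: XS_cases)
  case (Nil a) then show ?thesis using tA.rep_of_in tA.part_of_in by (simp add: frontH_def pushH_def)
next
  case (L a r l)
  then show ?thesis using tA.decomp[of a r] by (simp add: frontH_def pushH_def)
next
  case (R a r l) then show ?thesis using tA.rep_of_in tA.part_of_in by (simp add: frontH_def pushH_def)
qed

lemma actH_XS: "h \<in> carrier H \<Longrightarrow> x \<in> XS \<Longrightarrow> actH h x \<in> XS"
  unfolding actH_def using frontH_XS pushH_XS by (simp add: tA.m_closed)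

lemma actH_mult:
  assumes "h1 \<in> carrier H" "h2 \<in> carrier H" "x \<in> XS"
  shows "actH h1 (actH h2 x) = actH (h1 \<otimes>\<^bsub>H\<^esub> h2) x"
  using assms frontH_XS[OF assms(3)]
  by (simp add: actH_def frontH_pushH tA.m_closed tA.m_assoc)

lemma actH_one: "x \<in> XS \<Longrightarrow> actH \<one>\<^bsub>H\<^esub> x = x"
  using frontH_XS pushH_frontH by (simp add: actH_def)

lemma frontK_XS':
  assumes "x \<in> XS"
  shows "fst (frontK x) \<in> carrier K \<and> wfl (snd (frontK x)) \<and> \<not> startsR (snd (frontK x))"
  using assms by (cases rule: XS_cases) (auto simp: frontK_def phi_carr)
lemmas frontK_XS = frontK_XS'[THEN conjunct1] frontK_XS'[THEN conjunct2, THEN conjunct1]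
  frontK_XS'[THEN conjunct2, THEN conjunct2]

lemma pushK_XS:
  assumes "q \<in> carrier K" "wfl t" "\<not> startsR t"
  shows "pushK q t \<in> XS"
  using assms psi_A[OF tB.part_in[OF assms(1)]] tB.rep_idem[OF assms(1)] tB.rep_carr[OF assms(1)]
  by (auto simp: pushK_def XS_def)

lemma frontK_pushK:
  assumes "q \<in> carrier K" "\<not> startsR t"
  shows "frontK (pushK q t) = (q, t)"
proof (cases "rep K B q = \<one>\<^bsub>K\<^esub>")
  case True
  then have "q \<in> B" using tB.rep_one_iff[OF assms(1)] by simp
  then show ?thesis using True assms tB.part_of_in phi_psi
    by (cases t rule: startsR.cases) (auto simp: pushK_def frontK_def)
next
  case False
  then show ?thesis using tB.part_rep[OF assms(1)] phi_psi[OF tB.part_in[OF assms(1)]]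
    by (simp add: pushK_def frontK_def)
qed

lemma pushK_frontK:
  assumes "x \<in> XS"
  shows "pushK (fst (frontK x)) (snd (frontK x)) = x"
  using assms
proof (cases rule: XS_cases)
  case (Nil a) then show ?thesis using tB.rep_of_in tB.part_of_in phi_B psi_phi by (simp add: frontK_def pushK_def)
next
  case (L a r l)
  then show ?thesis using tB.rep_of_in tB.part_of_in phi_B psi_phi by (simp add: frontK_def pushK_def)
next
  case (R a r l) then show ?thesis using tB.decomp[of "\<phi> a" r] phi_B psi_phi by (simp add: frontK_def pushK_def)
qed

lemma actK_XS: "k \<in> carrier K \<Longrightarrow> x \<in> XS \<Longrightarrow> actK k x \<in> XS"
  unfolding actK_def using frontK_XS pushK_XS by (simp add: tB.m_closed)

lemma actK_mult:
  assumes "k1 \<in> carrier K" "k2 \<in> carrier K" "x \<in> XS"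
  shows "actK k1 (actK k2 x) = actK (k1 \<otimes>\<^bsub>K\<^esub> k2) x"
  using assms frontK_XS[OF assms(3)]
  by (simp add: actK_def frontK_pushK tB.m_closed tB.m_assoc)

lemma actK_one: "x \<in> XS \<Longrightarrow> actK \<one>\<^bsub>K\<^esub> x = x"
  using frontK_XS pushK_frontK by (simp add: actK_def)

lemma actH_A:
  assumes "a0 \<in> A" "x \<in> XS"
  shows "actH a0 x = actK (\<phi> a0) x"
  using assms(2)
proof (cases rule: XS_cases)
  case (Nil a)
  have "a0 \<otimes>\<^bsub>H\<^esub> a \<in> A" using tA.C_mult assms(1) Nil by blast
  then show ?thesis using Nil phi_mult[OF assms(1) Nil(2), symmetric] tA.rep_of_in tA.part_of_in
     tB.rep_of_in[OF phi_B] tB.part_of_in[OF phi_B] psi_phi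
    by (simp add: actH_def actK_def frontH_def frontK_def pushH_def pushK_def)
next
  case (L a r l)
  have aa: "a0 \<otimes>\<^bsub>H\<^esub> a \<in> A" using tA.C_mult assms(1) L by blast
  have "a0 \<otimes>\<^bsub>H\<^esub> (a \<otimes>\<^bsub>H\<^esub> r) = (a0 \<otimes>\<^bsub>H\<^esub> a) \<otimes>\<^bsub>H\<^esub> r"
    using L assms A_carr by (simp add: tA.m_assoc)
  then show ?thesis using L aa phi_mult[OF assms(1) L(2)] tA.decomp[OF aa L(3,4)]
     tB.rep_of_in[OF phi_B[OF aa]] tB.part_of_in[OF phi_B[OF aa]] psi_phi[OF aa]
    by (simp add: actH_def actK_def frontH_def frontK_def pushH_def pushK_def)
next
  case (R a r l)
  have aa: "a0 \<otimes>\<^bsub>H\<^esub> a \<in> A" using tA.C_mult assms(1) R by blast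
  have "\<phi> a0 \<otimes>\<^bsub>K\<^esub> (\<phi> a \<otimes>\<^bsub>K\<^esub> r) = \<phi> (a0 \<otimes>\<^bsub>H\<^esub> a) \<otimes>\<^bsub>K\<^esub> r"
    using R assms phi_carr phi_mult by (simp add: tB.m_assoc)
  then show ?thesis using R aa tA.rep_of_in[OF aa] tA.part_of_in[OF aa]
     tB.decomp[OF phi_B[OF aa] R(3,4)] psi_phi[OF aa]
    by (simp add: actH_def actK_def frontH_def frontK_def pushH_def pushK_def)
qed

end

locale amalS = amal H K A B \<phi>
  for H :: "('a,'c) monoid_scheme" and K :: "('k,'d) monoid_scheme" and A B \<phi> +
  fixes SH :: "'a set" assumes SH_carr: "SH \<subseteq> carrier H" and A_SH: "A \<subseteq> SH"
begin

definition Lp :: "('a + 'k) set" where "Lp = Inl ` SH \<union> Inr ` carrier K"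
definition x0 :: "'a \<times> ('a + 'k) list" where "x0 = (\<one>\<^bsub>H\<^esub>, [])"
definition mu :: "('a + 'k) list \<Rightarrow> nat" where "mu w = length w + length (filter (\<lambda>y. \<not> isl y) w)"
definition reducible :: "('a + 'k) list \<Rightarrow> bool" where
  "reducible w \<longleftrightarrow> (\<exists>w'. w' \<in> lists Lp \<and> mu w' < mu w \<and> length w' \<le> length w
      \<and> (\<forall>x\<in>XS. foldr act w' x = foldr act w x))"

lemma x0_XS: "x0 \<in> XS" by (simp add: x0_def XS_def tA.C_one)

lemma act_XS: "y \<in> Inl ` carrier H \<union> Inr ` carrier K \<Longrightarrow> x \<in> XS \<Longrightarrow> act y x \<in> XS"
  by (elim UnE imageE) (simp_all add: actH_XS actK_XS)

lemma Lp_gens: "Lp \<subseteq> Inl ` carrier H \<union> Inr ` carrier K"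
  using SH_carr by (auto simp: Lp_def)

lemma fw_XS: "w \<in> lists Lp \<Longrightarrow> x \<in> XS \<Longrightarrow> foldr act w x \<in> XS"
proof (induction w)
  case (Cons y w)
  then have "y \<in> Inl ` carrier H \<union> Inr ` carrier K" "foldr act w x \<in> XS" using Lp_gens by auto
  then show ?case by (simp add: act_XS)
qed simp

lemma fw_Inl: "hs \<in> lists (carrier H) \<Longrightarrow> x \<in> XS \<Longrightarrow> foldr act (map Inl hs) x = actH (word_prod H hs) x"
proof (induction hs)
  case Nil then show ?case by (simp add: word_prod_def actH_one)
next
  case (Cons h hs)
  then show ?case using actH_mult[of h "word_prod H hs" x] word_prod_carrier[OF tA.is_monoid, of hs]
    by (simp add: word_prod_def)
qed

lemma red_prefix:
  assumes "reducible v" "u \<in> lists Lp" shows "reducible (u @ v)"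
proof -
  obtain v' where v': "v' \<in> lists Lp" "mu v' < mu v" "length v' \<le> length v" "\<forall>x\<in>XS. foldr act v' x = foldr act v x"
    using assms(1) by (auto simp: reducible_def)
  show ?thesis unfolding reducible_def
    by (rule exI[of _ "u @ v'"]) (use v' assms(2) in \<open>auto simp: mu_def\<close>)
qed

lemma red_suffix:
  assumes "reducible u" "v \<in> lists Lp" shows "reducible (u @ v)"
proof -
  obtain u' where u': "u' \<in> lists Lp" "mu u' < mu u" "length u' \<le> length u" "\<forall>x\<in>XS. foldr act u' x = foldr act u x"
    using assms(1) by (auto simp: reducible_def)
  show ?thesis unfolding reducible_def
    by (rule exI[of _ "u' @ v"]) (use u' assms(2) fw_XS in \<open>auto simp: mu_def\<close>)
qed

lemma split_word:
  "w \<in> lists Lp \<Longrightarrow> \<exists>hs v. w = map Inl hs @ v \<and> hs \<in> lists SH \<and>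
      (v = [] \<or> (\<exists>k v'. v = Inr k # v' \<and> k \<in> carrier K \<and> v' \<in> lists Lp))"
proof (induction w)
  case Nil then show ?case by auto
next
  case (Cons y w)
  then obtain hs v where hv: "w = map Inl hs @ v" "hs \<in> lists SH"
      "(v = [] \<or> (\<exists>k v'. v = Inr k # v' \<and> k \<in> carrier K \<and> v' \<in> lists Lp))" by auto
  show ?case
  proof (cases y)
    case (Inl h)
    then have "h \<in> SH" using Cons.prems by (auto simp: Lp_def)
    then show ?thesis using hv Inl by (intro exI[of _ "h # hs"] exI[of _ v]) auto
  next
    case (Inr k)
    then have "k \<in> carrier K" using Cons.prems by (auto simp: Lp_def)
    then show ?thesis using Inr Cons.prems by (intro exI[of _ "[]"] exI[of _ "y # w"]) auto
  qed
qed

inductive irrK :: "('a + 'k) list \<Rightarrow> bool" where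
  irr1: "k \<in> carrier K \<Longrightarrow> k \<notin> B \<Longrightarrow> hs \<in> lists SH \<Longrightarrow> irrK (Inr k # map Inl hs)"
| irr2: "k \<in> carrier K \<Longrightarrow> k \<notin> B \<Longrightarrow> hs \<in> lists SH \<Longrightarrow> word_prod H hs \<notin> A \<Longrightarrow> irrK v
          \<Longrightarrow> irrK (Inr k # map Inl hs @ v)"

lemma irr_Lp: "irrK v \<Longrightarrow> v \<in> lists Lp"
  by (induction rule: irrK.induct) (auto simp: Lp_def)

lemma actK_new:
  assumes "y \<in> XS" "\<not> startsR (snd y)" "k \<in> carrier K" "k \<notin> B"
  shows "\<exists>r. snd (actK k y) = Inr r # snd y"
proof -
  have f: "frontK y = (\<phi> (fst y), snd y)" using assms(2) by (cases "snd y" rule: startsR.cases) (auto simp: frontK_def)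
  have fy: "fst y \<in> A" using assms(1) by (simp add: XS_def)
  have q: "k \<otimes>\<^bsub>K\<^esub> \<phi> (fst y) \<notin> B"
  proof
    assume "k \<otimes>\<^bsub>K\<^esub> \<phi> (fst y) \<in> B"
    then have "k \<otimes>\<^bsub>K\<^esub> \<phi> (fst y) \<otimes>\<^bsub>K\<^esub> inv\<^bsub>K\<^esub> (\<phi> (fst y)) \<in> B"
      using tB.C_mult tB.C_inv phi_B fy by blast
    then show False using assms(3,4) phi_carr[OF fy] by (simp add: tB.m_assoc)
  qed
  then have "rep K B (k \<otimes>\<^bsub>K\<^esub> \<phi> (fst y)) \<noteq> \<one>\<^bsub>K\<^esub>"
    using tB.rep_one_iff assms(3) phi_carr[OF fy] by (simp add: tB.m_closed)
  then show ?thesis by (simp add: actK_def f pushK_def)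
qed

lemma actH_new:
  assumes "y \<in> XS" "\<not> startsL (snd y)" "h \<in> carrier H" "h \<notin> A"
  shows "\<exists>r. snd (actH h y) = Inl r # snd y"
proof -
  have f: "frontH y = y" using assms(2) by (cases "snd y" rule: startsL.cases) (auto simp: frontH_def)
  have fy: "fst y \<in> A" using assms(1) by (simp add: XS_def)
  have q: "h \<otimes>\<^bsub>H\<^esub> fst y \<notin> A"
  proof
    assume "h \<otimes>\<^bsub>H\<^esub> fst y \<in> A"
    then have "h \<otimes>\<^bsub>H\<^esub> fst y \<otimes>\<^bsub>H\<^esub> inv\<^bsub>H\<^esub> (fst y) \<in> A"
      using tA.C_mult tA.C_inv fy by blast
    then show False using assms(3,4) A_carr[OF fy] by (simp add: tA.m_assoc)
  qed
  then have "rep H A (h \<otimes>\<^bsub>H\<^esub> fst y) \<noteq> \<one>\<^bsub>H\<^esub>"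
    using tA.rep_one_iff assms(3) A_carr[OF fy] by (simp add: tA.m_closed)
  then show ?thesis by (simp add: actH_def f pushH_def)
qed

lemma actH_x0: "h \<in> carrier H \<Longrightarrow> \<forall>z\<in>set (snd (actH h x0)). isl z"
  by (simp add: actH_def x0_def frontH_def pushH_def)

lemma frontH_actH_x0: "h \<in> carrier H \<Longrightarrow> frontH (actH h x0) = (h, [])"
  by (simp add: actH_def x0_def frontH_def[of "(_, [])"] frontH_pushH)

lemma irr_act: "irrK v \<Longrightarrow> \<exists>a r l. foldr act v x0 = (a, Inr r # l)"
proof (induction rule: irrK.induct)
  case (irr1 k hs)
  have hs: "hs \<in> lists (carrier H)" using irr1 SH_carr by auto
  have p: "word_prod H hs \<in> carrier H" using word_prod_carrier[OF tA.is_monoid hs] .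
  let ?y = "actH (word_prod H hs) x0"
  have y: "?y \<in> XS" using actH_XS[OF p x0_XS] .
  have "\<not> startsR (snd ?y)" using actH_x0[OF p] by (cases "snd ?y" rule: startsR.cases) auto
  then obtain r where "snd (actK k ?y) = Inr r # snd ?y" using actK_new[OF y _ irr1(1,2)] by blast
  moreover have "foldr act (Inr k # map Inl hs) x0 = actK k ?y" using fw_Inl[OF hs x0_XS] by simp
  ultimately show ?case by (cases "actK k ?y") auto
next
  case (irr2 k hs v)
  have hs: "hs \<in> lists (carrier H)" using irr2 SH_carr by auto
  have p: "word_prod H hs \<in> carrier H" using word_prod_carrier[OF tA.is_monoid hs] .
  obtain a r l where v: "foldr act v x0 = (a, Inr r # l)" using irr2.IH by blast
  have vX: "foldr act v x0 \<in> XS" using fw_XS[OF irr_Lp[OF irr2.hyps(5)] x0_XS] .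
  let ?y = "actH (word_prod H hs) (foldr act v x0)"
  obtain r1 where r1: "snd ?y = Inl r1 # Inr r # l"
    using actH_new[OF vX _ p irr2.hyps(4)] v by auto
  have y: "?y \<in> XS" using actH_XS[OF p vX] .
  have "\<not> startsR (snd ?y)" using r1 by simp
  then obtain r2 where "snd (actK k ?y) = Inr r2 # snd ?y" using actK_new[OF y _ irr2(1,2)] by blast
  moreover have "foldr act (Inr k # map Inl hs @ v) x0 = actK k ?y" using fw_Inl[OF hs vX] by simp
  ultimately show ?case by (cases "actK k ?y") auto
qed

end

context amalS begin

lemma map_Inl_Lp: "hs \<in> lists SH \<Longrightarrow> map Inl hs \<in> lists Lp"
  by (auto simp: Lp_def)

lemma decomp:
  "v \<in> lists Lp \<Longrightarrow> \<exists>k rest. v = Inr k # rest \<Longrightarrow> reducible v \<or> irrK v"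
proof (induction "length v" arbitrary: v rule: less_induct)
  case less
  obtain k rest where v: "v = Inr k # rest" using less.prems(2) by blast
  have k: "k \<in> carrier K" and rest: "rest \<in> lists Lp" using less.prems(1) v by (auto simp: Lp_def)
  obtain hs v' where hv: "rest = map Inl hs @ v'" "hs \<in> lists SH"
      "v' = [] \<or> (\<exists>k v''. v' = Inr k # v'' \<and> k \<in> carrier K \<and> v'' \<in> lists Lp)"
    using split_word[OF rest] by blast
  have hsc: "hs \<in> lists (carrier H)" using hv(2) SH_carr by auto
  have p: "word_prod H hs \<in> carrier H" using word_prod_carrier[OF tA.is_monoid hsc] .
  show ?case
  proof (cases "k \<in> B")
    case True
    have "reducible v" unfolding reducible_def
    proof (intro exI[of _ "Inl (\<psi> k) # rest"] conjI)
      show "Inl (\<psi> k) # rest \<in> lists Lp" using rest psi_A[OF True] A_SH by (auto simp: Lp_def)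
      show "mu (Inl (\<psi> k) # rest) < mu v" by (simp add: v mu_def)
      show "length (Inl (\<psi> k) # rest) \<le> length v" by (simp add: v)
      show "\<forall>x\<in>XS. foldr act (Inl (\<psi> k) # rest) x = foldr act v x"
        using actH_A[OF psi_A[OF True] fw_XS[OF rest]] phi_psi[OF True] by (simp add: v)
    qed
    then show ?thesis by blast
  next
    case kB: False
    show ?thesis
    proof (cases "v' = []")
      case True
      then show ?thesis using irr1[OF k kB hv(2)] v hv(1) by simp
    next
      case False
      then obtain k' v'' where v': "v' = Inr k' # v''" "k' \<in> carrier K" "v'' \<in> lists Lp" using hv(3) by blast
      show ?thesis
      proof (cases "word_prod H hs \<in> A")
        case True
        let ?seg = "Inr k # map Inl hs @ [Inr k']"
        have "reducible ?seg" unfolding reducible_def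
        proof (intro exI[of _ "[Inr (k \<otimes>\<^bsub>K\<^esub> \<phi> (word_prod H hs) \<otimes>\<^bsub>K\<^esub> k')]"] conjI)
          show "[Inr (k \<otimes>\<^bsub>K\<^esub> \<phi> (word_prod H hs) \<otimes>\<^bsub>K\<^esub> k')] \<in> lists Lp"
            using k v'(2) phi_carr[OF True] by (auto simp: Lp_def tB.m_closed)
          show "mu [Inr (k \<otimes>\<^bsub>K\<^esub> \<phi> (word_prod H hs) \<otimes>\<^bsub>K\<^esub> k')] < mu ?seg" by (simp add: mu_def)
          show "length [Inr (k \<otimes>\<^bsub>K\<^esub> \<phi> (word_prod H hs) \<otimes>\<^bsub>K\<^esub> k')] \<le> length ?seg" by simp
          show "\<forall>x\<in>XS. foldr act [Inr (k \<otimes>\<^bsub>K\<^esub> \<phi> (word_prod H hs) \<otimes>\<^bsub>K\<^esub> k')] x = foldr act ?seg x"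
          proof
            fix x assume x: "x \<in> XS"
            have x1: "actK k' x \<in> XS" using actK_XS[OF v'(2) x] .
            have "foldr act ?seg x = actK k (actH (word_prod H hs) (actK k' x))"
              using fw_Inl[OF hsc x1] by simp
            also have "\<dots> = actK k (actK (\<phi> (word_prod H hs)) (actK k' x))"
              using actH_A[OF True x1] by simp
            also have "\<dots> = actK (k \<otimes>\<^bsub>K\<^esub> \<phi> (word_prod H hs)) (actK k' x)"
              using actK_mult[OF k phi_carr[OF True] x1] by simp
            also have "\<dots> = actK (k \<otimes>\<^bsub>K\<^esub> \<phi> (word_prod H hs) \<otimes>\<^bsub>K\<^esub> k') x"
              using actK_mult[OF tB.m_closed[OF k phi_carr[OF True]] v'(2) x] by simp
            finally show "foldr act [Inr (k \<otimes>\<^bsub>K\<^esub> \<phi> (word_prod H hs) \<otimes>\<^bsub>K\<^esub> k')] x = foldr act ?seg x"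
              by simp
          qed
        qed
        then have "reducible (?seg @ v'')" using red_suffix v'(3) by blast
        then show ?thesis using v hv(1) v'(1) by simp
      next
        case pA: False
        have "length v' < length v" using v hv(1) by simp
        moreover have "v' \<in> lists Lp" using v' by (auto simp: Lp_def)
        ultimately have "reducible v' \<or> irrK v'" using less.hyps v'(1) by blast
        then show ?thesis
        proof
          assume "reducible v'"
          moreover have "Inr k # map Inl hs \<in> lists Lp" using map_Inl_Lp[OF hv(2)] k by (auto simp: Lp_def)
          ultimately have "reducible ((Inr k # map Inl hs) @ v')" by (rule red_prefix)
          then show ?thesis using v hv(1) by simp
        next
          assume "irrK v'"
          then show ?thesis using irr2[OF k kB hv(2) pA] v hv(1) by simp
        qed
      qed
    qed
  qed
qed

lemma LBw:
  "w \<in> lists Lp \<Longrightarrow> h \<in> carrier H \<Longrightarrow> foldr act w x0 = actH h x0 \<Longrightarrow>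
     \<exists>ss\<in>lists SH. length ss \<le> length w \<and> word_prod H ss = h"
proof (induction "mu w" arbitrary: w rule: less_induct)
  case less
  obtain hs v where hv: "w = map Inl hs @ v" "hs \<in> lists SH"
      "v = [] \<or> (\<exists>k v'. v = Inr k # v' \<and> k \<in> carrier K \<and> v' \<in> lists Lp)"
    using split_word[OF less.prems(1)] by blast
  have hsc: "hs \<in> lists (carrier H)" using hv(2) SH_carr by auto
  have p: "word_prod H hs \<in> carrier H" using word_prod_carrier[OF tA.is_monoid hsc] .
  show ?case
  proof (cases "v = []")
    case True
    have "w = map Inl hs" using hv(1) True by simp
    then have "actH (word_prod H hs) x0 = actH h x0" using less.prems(3) fw_Inl[OF hsc x0_XS] by simp
    then have "frontH (actH (word_prod H hs) x0) = frontH (actH h x0)" by (rule arg_cong)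
    then have "word_prod H hs = h" unfolding frontH_actH_x0[OF p] frontH_actH_x0[OF less.prems(2)] by simp
    moreover have "length hs \<le> length w" using \<open>w = map Inl hs\<close> by simp
    ultimately show ?thesis using hv(2) by blast
  next
    case False
    then obtain k v' where v: "v = Inr k # v'" "k \<in> carrier K" "v' \<in> lists Lp" using hv(3) by blast
    have vL: "v \<in> lists Lp" using v by (auto simp: Lp_def)
    have "reducible v \<or> irrK v" using decomp[OF vL] v by blast
    then show ?thesis
    proof
      assume "reducible v"
      then have "reducible w" using red_prefix[OF _ map_Inl_Lp[OF hv(2)]] hv(1) by simp
      then obtain w' where w': "w' \<in> lists Lp" "mu w' < mu w" "length w' \<le> length w"
          "\<forall>x\<in>XS. foldr act w' x = foldr act w x" by (auto simp: reducible_def)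
      then have "foldr act w' x0 = actH h x0" using less.prems(3) x0_XS by simp
      then obtain ss where "ss \<in> lists SH" "length ss \<le> length w'" "word_prod H ss = h"
        using less.hyps[OF w'(2) w'(1) less.prems(2)] by blast
      then show ?thesis using w'(3) by (intro bexI[of _ ss]) auto
    next
      assume "irrK v"
      then obtain a r l where y: "foldr act v x0 = (a, Inr r # l)" using irr_act by blast
      have "snd (actH (word_prod H hs) (a, Inr r # l)) = snd (pushH (word_prod H hs \<otimes>\<^bsub>H\<^esub> a) (Inr r # l))"
        by (simp add: actH_def frontH_def)
      then have "Inr r \<in> set (snd (actH (word_prod H hs) (a, Inr r # l)))"
        by (simp add: pushH_def)
      moreover have "foldr act w x0 = actH (word_prod H hs) (a, Inr r # l)"
        using hv(1) fw_Inl[OF hsc fw_XS[OF vL x0_XS]] y by simp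
      ultimately have "Inr r \<in> set (snd (actH h x0))" using less.prems(3) by simp
      then have "isl (Inr r :: 'a + 'k)" using actH_x0[OF less.prems(2)] by blast
      then show ?thesis by simp
    qed
  qed
qed

end

lemma gen_transfer:
  assumes "h \<in> generate H S"
    and one: "g \<one>\<^bsub>H\<^esub> \<in> generate G T"
    and incl: "\<And>s. s \<in> S \<Longrightarrow> g s \<in> generate G T"
    and inv: "\<And>s. s \<in> S \<Longrightarrow> g (inv\<^bsub>H\<^esub> s) \<in> generate G T"
    and mult: "\<And>x y. x \<in> generate H S \<Longrightarrow> y \<in> generate H S \<Longrightarrow> g (x \<otimes>\<^bsub>H\<^esub> y) = g x \<otimes>\<^bsub>G\<^esub> g y"
  shows "g h \<in> generate G T"
  using assms(1)
proof induction
  case (eng h1 h2) then show ?case using mult generate.eng by metis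
qed (use one incl inv in auto)

lemma sym_gen_set:
  assumes "group H" "finitely_generated H"
  shows "\<exists>S0. finite S0 \<and> S0 \<subseteq> carrier H \<and> generate H S0 = carrier H"
  using assms(2) by (auto simp: finitely_generated_def)

lemma good_SH:
  assumes grp: "group H" and S0: "finite S0" "S0 \<subseteq> carrier H" "generate H S0 = carrier H"
    and E: "finite E" "E \<subseteq> carrier H" "\<forall>e\<in>E. inv\<^bsub>H\<^esub> e \<in> E"
  defines "SH \<equiv> S0 \<union> (\<lambda>s. inv\<^bsub>H\<^esub> s) ` S0 \<union> E"
  shows "finite SH" "SH \<subseteq> carrier H" "\<forall>s\<in>SH. inv\<^bsub>H\<^esub> s \<in> SH" "generate H SH = carrier H" "E \<subseteq> SH"
proof -
  interpret group H by fact
  show "finite SH" using S0 E by (simp add: SH_def)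
  show c: "SH \<subseteq> carrier H" using S0 E by (auto simp: SH_def)
  show "\<forall>s\<in>SH. inv\<^bsub>H\<^esub> s \<in> SH" using S0 E by (auto simp: SH_def subsetD)
  show "generate H SH = carrier H"
  proof
    show "generate H SH \<subseteq> carrier H" by (rule generate_incl[OF c])
    have "generate H S0 \<subseteq> generate H SH" by (rule mono_generate) (auto simp: SH_def)
    then show "carrier H \<subseteq> generate H SH" using S0 by simp
  qed
  show "E \<subseteq> SH" by (auto simp: SH_def)
qed

context amal begin

abbreviation "YY \<equiv> amalg_gens H K"
abbreviation "RR \<equiv> amalg_rel H K A \<phi>"
abbreviation "cls \<equiv> \<lambda>u. pres_class YY RR u"

lemma Rok: "RR u v \<Longrightarrow> u \<in> lists YY \<and> v \<in> lists YY"
  by (auto simp: amalg_rel_def amalg_gens_def tA.m_closed tB.m_closed A_carr phi_carr)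

fun ivA :: "'a + 'k \<Rightarrow> 'a + 'k" where
  "ivA (Inl h) = Inl (inv\<^bsub>H\<^esub> h)" | "ivA (Inr k) = Inr (inv\<^bsub>K\<^esub> k)"

lemma ivA_ok: "y \<in> YY \<Longrightarrow> ivA y \<in> YY \<and> cong_gen RR [ivA y, y] []"
proof -
  assume y: "y \<in> YY"
  show ?thesis
  proof (cases y)
    case (Inl h)
    then have h: "h \<in> carrier H" using y by (auto simp: amalg_gens_def)
    have "RR [Inl (inv\<^bsub>H\<^esub> h), Inl h] [Inl \<one>\<^bsub>H\<^esub>]" using h
      unfolding amalg_rel_def by (intro disjI1 bexI[of _ "inv\<^bsub>H\<^esub> h"] bexI[of _ h]) auto
    moreover have "RR [Inl \<one>\<^bsub>H\<^esub>] []" by (simp add: amalg_rel_def)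
    ultimately show ?thesis using Inl h by (auto simp: amalg_gens_def intro: cong_gen.base cong_gen.trans)
  next
    case (Inr k)
    then have k: "k \<in> carrier K" using y by (auto simp: amalg_gens_def)
    have "RR [Inr (inv\<^bsub>K\<^esub> k), Inr k] [Inr \<one>\<^bsub>K\<^esub>]" using k
      unfolding amalg_rel_def by (intro disjI2 disjI2 disjI1 bexI[of _ "inv\<^bsub>K\<^esub> k"] bexI[of _ k]) auto
    moreover have "RR [Inr \<one>\<^bsub>K\<^esub>] []" by (simp add: amalg_rel_def)
    ultimately show ?thesis using Inr k by (auto simp: amalg_gens_def intro: cong_gen.base cong_gen.trans)
  qed
qed

lemma G_group: "group (amalg H K A \<phi>)"
  unfolding amalg_def by (rule presented_group[OF ivA_ok])

lemma Ract: "RR u v \<Longrightarrow> x \<in> XS \<Longrightarrow> foldr act u x = foldr act v x"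
  unfolding amalg_rel_def
  by (auto simp: actH_mult actK_mult actH_one actK_one actH_A)

lemma act_XS': "y \<in> YY \<Longrightarrow> x \<in> XS \<Longrightarrow> act y x \<in> XS"
  unfolding amalg_gens_def by (elim UnE imageE) (simp_all add: actH_XS actK_XS)

lemma cls_mult_H: "x \<in> carrier H \<Longrightarrow> y \<in> carrier H \<Longrightarrow>
   cls [Inl (x \<otimes>\<^bsub>H\<^esub> y)] = cls [Inl x] \<otimes>\<^bsub>amalg H K A \<phi>\<^esub> cls [Inl y]"
proof -
  assume xy: "x \<in> carrier H" "y \<in> carrier H"
  have "RR [Inl x, Inl y] [Inl (x \<otimes>\<^bsub>H\<^esub> y)]" using xy unfolding amalg_rel_def by blast
  then have "cls [Inl x, Inl y] = cls [Inl (x \<otimes>\<^bsub>H\<^esub> y)]"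
    using xy by (subst cls_eq_iff) (auto simp: amalg_gens_def tA.m_closed intro: cong_gen.base)
  then show ?thesis using presented_mult[of "[Inl x]" YY "[Inl y]" RR] xy
    by (simp add: amalg_def amalg_gens_def)
qed

lemma cls_mult_K: "x \<in> carrier K \<Longrightarrow> y \<in> carrier K \<Longrightarrow>
   cls [Inr (x \<otimes>\<^bsub>K\<^esub> y)] = cls [Inr x] \<otimes>\<^bsub>amalg H K A \<phi>\<^esub> cls [Inr y]"
proof -
  assume xy: "x \<in> carrier K" "y \<in> carrier K"
  have "RR [Inr x, Inr y] [Inr (x \<otimes>\<^bsub>K\<^esub> y)]" using xy unfolding amalg_rel_def by blast
  then have "cls [Inr x, Inr y] = cls [Inr (x \<otimes>\<^bsub>K\<^esub> y)]"
    using xy by (subst cls_eq_iff) (auto simp: amalg_gens_def tB.m_closed intro: cong_gen.base)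
  then show ?thesis using presented_mult[of "[Inr x]" YY "[Inr y]" RR] xy
    by (simp add: amalg_def amalg_gens_def)
qed

lemma cls_one_H: "cls [Inl \<one>\<^bsub>H\<^esub>] = \<one>\<^bsub>amalg H K A \<phi>\<^esub>"
proof -
  have "RR [Inl \<one>\<^bsub>H\<^esub>] []" by (simp add: amalg_rel_def)
  then have "cls [Inl \<one>\<^bsub>H\<^esub>] = cls []"
    by (subst cls_eq_iff) (auto simp: amalg_gens_def intro: cong_gen.base)
  then show ?thesis by (simp add: amalg_def presented_one)
qed

lemma cls_one_K: "cls [Inr \<one>\<^bsub>K\<^esub>] = \<one>\<^bsub>amalg H K A \<phi>\<^esub>"
proof -
  have "RR [Inr \<one>\<^bsub>K\<^esub>] []" by (simp add: amalg_rel_def)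
  then have "cls [Inr \<one>\<^bsub>K\<^esub>] = cls []"
    by (subst cls_eq_iff) (auto simp: amalg_gens_def intro: cong_gen.base)
  then show ?thesis by (simp add: amalg_def presented_one)
qed

end

lemma amalg_case:
  fixes H :: "('a,'c) monoid_scheme" and K :: "('k,'d) monoid_scheme"
  assumes "group H" "finitely_generated H" "group K" "finitely_generated K"
    "subgroup A H" "subgroup B K" "finite A" "finite B"
    "\<phi> \<in> iso (H\<lparr>carrier := A\<rparr>) (K\<lparr>carrier := B\<rparr>)"
  shows "\<exists>SH SG. finite SH \<and> SH \<subseteq> carrier H \<and> generate H SH = carrier H
               \<and> (\<forall>s\<in>SH. inv\<^bsub>H\<^esub> s \<in> SH)
               \<and> finite SG \<and> SG \<subseteq> carrier (amalg H K A \<phi>) \<and> generate (amalg H K A \<phi>) SG = carrier (amalg H K A \<phi>)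
               \<and> (\<forall>s\<in>SG. inv\<^bsub>amalg H K A \<phi>\<^esub> s \<in> SG)
               \<and> amalg_incl H K A \<phi> ` SH \<subseteq> SG
               \<and> (\<forall>h1\<in>carrier H. \<forall>h2\<in>carrier H.
                    word_dist H SH h1 h2 = word_dist (amalg H K A \<phi>) SG (amalg_incl H K A \<phi> h1) (amalg_incl H K A \<phi> h2))"
proof -
  interpret amal H K A B \<phi> using assms by (simp add: amal_def)
  obtain S0 where S0: "finite S0" "S0 \<subseteq> carrier H" "generate H S0 = carrier H"
    using assms(2) by (auto simp: finitely_generated_def)
  obtain T0 where T0: "finite T0" "T0 \<subseteq> carrier K" "generate K T0 = carrier K"
    using assms(4) by (auto simp: finitely_generated_def)
  define SH where "SH = S0 \<union> (\<lambda>s. inv\<^bsub>H\<^esub> s) ` S0 \<union> A"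
  define SK where "SK = T0 \<union> (\<lambda>s. inv\<^bsub>K\<^esub> s) ` T0 \<union> B"
  have SH: "finite SH" "SH \<subseteq> carrier H" "\<forall>s\<in>SH. inv\<^bsub>H\<^esub> s \<in> SH" "generate H SH = carrier H" "A \<subseteq> SH"
    using good_SH[OF assms(1) S0 assms(7) tA.C_carr] tA.C_inv unfolding SH_def by auto
  have SK: "finite SK" "SK \<subseteq> carrier K" "\<forall>s\<in>SK. inv\<^bsub>K\<^esub> s \<in> SK" "generate K SK = carrier K" "B \<subseteq> SK"
    using good_SH[OF assms(3) T0 assms(8) tB.C_carr] tB.C_inv unfolding SK_def by auto
  interpret amalS H K A B \<phi> SH using SH by (simp add: amalS_def amalS_axioms_def amal_axioms)
  let ?G = "amalg H K A \<phi>"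
  let ?\<iota> = "amalg_incl H K A \<phi>"
  define Y0 where "Y0 = Inl ` SH \<union> Inr ` SK"
  define SG where "SG = (\<lambda>y. cls [y]) ` Y0"
  have Y0Y: "Y0 \<subseteq> YY" using SH SK by (auto simp: Y0_def amalg_gens_def)
  have Y0Lp: "Y0 \<subseteq> Lp" using SK by (auto simp: Y0_def Lp_def)
  have grp: "group ?G" by (rule G_group)
  have carrG: "carrier ?G = cls ` lists YY" by (simp add: amalg_def presented_carrier)
  have SGc: "SG \<subseteq> carrier ?G" using Y0Y by (auto simp: SG_def carrG)
  have iv: "inv\<^bsub>?G\<^esub> (cls [y]) = cls [ivA y]" if "y \<in> YY" for y
    unfolding amalg_def by (rule presented_inv[OF ivA_ok that])
  have SGinv: "\<forall>s\<in>SG. inv\<^bsub>?G\<^esub> s \<in> SG"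
  proof
    fix s assume "s \<in> SG"
    then obtain y where y: "y \<in> Y0" "s = cls [y]" by (auto simp: SG_def)
    then have "ivA y \<in> Y0" using SH SK by (cases y) (auto simp: Y0_def)
    then show "inv\<^bsub>?G\<^esub> s \<in> SG" using y iv Y0Y by (auto simp: SG_def)
  qed
  have genH: "cls [Inl h] \<in> generate ?G SG" if "h \<in> carrier H" for h
  proof -
    have "h \<in> generate H SH" using that SH by simp
    then show ?thesis
    proof (rule gen_transfer[where g = "\<lambda>h. cls [Inl h]"])
      show "cls [Inl \<one>\<^bsub>H\<^esub>] \<in> generate ?G SG" by (simp add: cls_one_H generate.one)
      show "cls [Inl s] \<in> generate ?G SG" if "s \<in> SH" for s
        using that by (auto simp: SG_def Y0_def intro!: generate.incl)
      show "cls [Inl (inv\<^bsub>H\<^esub> s)] \<in> generate ?G SG" if "s \<in> SH" for s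
        using that SH(3) by (auto simp: SG_def Y0_def intro!: generate.incl)
      show "cls [Inl (x \<otimes>\<^bsub>H\<^esub> y)] = cls [Inl x] \<otimes>\<^bsub>?G\<^esub> cls [Inl y]"
        if "x \<in> generate H SH" "y \<in> generate H SH" for x y
        using that SH(4) cls_mult_H by simp
    qed
  qed
  have genK: "cls [Inr k] \<in> generate ?G SG" if "k \<in> carrier K" for k
  proof -
    have "k \<in> generate K SK" using that SK by simp
    then show ?thesis
    proof (rule gen_transfer[where g = "\<lambda>k. cls [Inr k]"])
      show "cls [Inr \<one>\<^bsub>K\<^esub>] \<in> generate ?G SG" by (simp add: cls_one_K generate.one)
      show "cls [Inr s] \<in> generate ?G SG" if "s \<in> SK" for s
        using that by (auto simp: SG_def Y0_def intro!: generate.incl)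
      show "cls [Inr (inv\<^bsub>K\<^esub> s)] \<in> generate ?G SG" if "s \<in> SK" for s
        using that SK(3) by (auto simp: SG_def Y0_def intro!: generate.incl)
      show "cls [Inr (x \<otimes>\<^bsub>K\<^esub> y)] = cls [Inr x] \<otimes>\<^bsub>?G\<^esub> cls [Inr y]"
        if "x \<in> generate K SK" "y \<in> generate K SK" for x y
        using that SK(4) cls_mult_K by simp
    qed
  qed
  have genG: "generate ?G SG = carrier ?G"
    unfolding amalg_def
  proof (rule presented_generate)
    show "group (presented YY RR)" using grp by (simp add: amalg_def)
    show "SG \<subseteq> carrier (presented YY RR)" using SGc by (simp add: amalg_def)
    fix y assume "y \<in> YY"
    then show "cls [y] \<in> generate (presented YY RR) SG"
      using genH genK by (auto simp: amalg_gens_def amalg_def)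
  qed
  have incl: "?\<iota> ` SH \<subseteq> SG" by (auto simp: SG_def Y0_def amalg_incl_def)
  have hom: "?\<iota> \<in> hom H ?G"
  proof (rule homI)
    fix x assume "x \<in> carrier H"
    then show "?\<iota> x \<in> carrier ?G" by (auto simp: carrG amalg_incl_def amalg_gens_def)
  next
    fix x y assume "x \<in> carrier H" "y \<in> carrier H"
    then show "?\<iota> (x \<otimes>\<^bsub>H\<^esub> y) = ?\<iota> x \<otimes>\<^bsub>?G\<^esub> ?\<iota> y" by (simp add: amalg_incl_def cls_mult_H)
  qed
  have LB: "\<exists>ss\<in>lists SH. length ss \<le> length ws \<and> word_prod H ss = h"
    if ws: "ws \<in> lists SG" and h: "h \<in> carrier H" and e: "word_prod ?G ws = ?\<iota> h" for ws h
  proof -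
    obtain w where w: "w \<in> lists Y0" "ws = map (\<lambda>y. cls [y]) w"
      using ws lists_image[of "\<lambda>y. cls [y]" Y0] by (auto simp: SG_def)
    have wY: "w \<in> lists YY" using w(1) Y0Y by auto
    have "cls w = cls [Inl h]"
      using e presented_word_prod[OF wY, of RR] w(2) by (simp add: amalg_def amalg_incl_def)
    then have "cong_gen RR w [Inl h]" using wY h by (subst (asm) cls_eq_iff) (auto simp: amalg_gens_def)
    then have "\<forall>x\<in>XS. foldr act w x = foldr act [Inl h] x"
      using act_cong[of RR YY XS act, OF Rok act_XS' Ract _ wY] by blast
    then have "foldr act w x0 = actH h x0" using x0_XS by simp
    moreover have "length w = length ws" using w(2) by simp
    ultimately show ?thesis using LBw[of w h] w(1) Y0Lp h by auto
  qed
  have dist: "\<forall>h1\<in>carrier H. \<forall>h2\<in>carrier H. word_dist H SH h1 h2 = word_dist ?G SG (?\<iota> h1) (?\<iota> h2)"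
    using transfer_dist[OF assms(1) grp SH(2,3,4) hom incl LB] by blast
  show ?thesis
    using SH SGc genG SGinv incl dist
    by (intro exI[of _ SH] exI[of _ SG]) (auto simp: SG_def Y0_def SH(1) SK(1))
qed

fun startsE :: "bool \<Rightarrow> (bool \<times> 'x) list \<Rightarrow> bool" where
  "startsE e ((e', _) # _) = (e' = e)" | "startsE e [] = False"

locale hnnl =
  fixes H :: "('a,'c) monoid_scheme" and A :: "'a set" and B :: "'a set" and \<phi> :: "'a \<Rightarrow> 'a"
  assumes grpH: "group H" and subA: "subgroup A H" and subB: "subgroup B H"
    and iso: "\<phi> \<in> iso (H\<lparr>carrier := A\<rparr>) (H\<lparr>carrier := B\<rparr>)"
begin

definition \<psi> :: "'a \<Rightarrow> 'a" where "\<psi> = inv_into A \<phi>"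
definition CC :: "bool \<Rightarrow> 'a set" where "CC e = (if e then B else A)"
definition th :: "bool \<Rightarrow> 'a \<Rightarrow> 'a" where "th e = (if e then \<psi> else \<phi>)"

lemma bij: "bij_betw \<phi> A B" using iso by (auto simp: iso_def)
lemma phi_B: "a \<in> A \<Longrightarrow> \<phi> a \<in> B" using iso by (auto simp: iso_def hom_def)
lemma phi_mult: "a \<in> A \<Longrightarrow> b \<in> A \<Longrightarrow> \<phi> (a \<otimes>\<^bsub>H\<^esub> b) = \<phi> a \<otimes>\<^bsub>H\<^esub> \<phi> b"
  using iso by (auto simp: iso_def hom_def)
lemma psi_A: "b \<in> B \<Longrightarrow> \<psi> b \<in> A"
  using bij unfolding \<psi>_def by (metis bij_betw_def inv_into_into)
lemma phi_psi: "b \<in> B \<Longrightarrow> \<phi> (\<psi> b) = b"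
  using bij unfolding \<psi>_def by (metis bij_betw_def f_inv_into_f)
lemma psi_phi: "a \<in> A \<Longrightarrow> \<psi> (\<phi> a) = a"
  using bij unfolding \<psi>_def by (metis bij_betw_def inv_into_f_f)
lemma psi_mult: "a \<in> B \<Longrightarrow> b \<in> B \<Longrightarrow> \<psi> (a \<otimes>\<^bsub>H\<^esub> b) = \<psi> a \<otimes>\<^bsub>H\<^esub> \<psi> b"
proof -
  assume ab: "a \<in> B" "b \<in> B"
  have "\<phi> (\<psi> a \<otimes>\<^bsub>H\<^esub> \<psi> b) = a \<otimes>\<^bsub>H\<^esub> b" using phi_mult[OF psi_A psi_A] ab phi_psi by simp
  then have "\<psi> (a \<otimes>\<^bsub>H\<^esub> b) = \<psi> (\<phi> (\<psi> a \<otimes>\<^bsub>H\<^esub> \<psi> b))" by simp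
  also have "\<dots> = \<psi> a \<otimes>\<^bsub>H\<^esub> \<psi> b" using psi_phi subgroup.m_closed[OF subA psi_A psi_A] ab by simp
  finally show ?thesis .
qed

lemma CC_sub: "subgroup (CC e) H" by (simp add: CC_def subA subB)
lemma tvC: "tv H (CC e)" by (simp add: tv_def tv_axioms_def grpH CC_sub)
lemma th_in: "c \<in> CC e \<Longrightarrow> th e c \<in> CC (\<not> e)"
  by (cases e) (auto simp: CC_def th_def phi_B psi_A)
lemma th_th: "c \<in> CC e \<Longrightarrow> th (\<not> e) (th e c) = c"
  by (cases e) (auto simp: CC_def th_def phi_psi psi_phi)
lemma th_mult: "a \<in> CC e \<Longrightarrow> b \<in> CC e \<Longrightarrow> th e (a \<otimes>\<^bsub>H\<^esub> b) = th e a \<otimes>\<^bsub>H\<^esub> th e b"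
  by (cases e) (auto simp: CC_def th_def phi_mult psi_mult)
lemma CC_carr: "c \<in> CC e \<Longrightarrow> c \<in> carrier H"
  using subgroup.subset[OF CC_sub] by blast

sublocale G: group H by (rule grpH)

fun wfl :: "(bool \<times> 'a) list \<Rightarrow> bool" where
  "wfl [] = True"
| "wfl ((e, r) # l) = (r \<in> carrier H \<and> rep H (CC e) r = r \<and> wfl l \<and> \<not> (r = \<one>\<^bsub>H\<^esub> \<and> startsE (\<not> e) l))"

definition XS :: "('a \<times> (bool \<times> 'a) list) set" where
  "XS = {x. fst x \<in> carrier H \<and> wfl (snd x)}"

definition actL :: "'a \<Rightarrow> 'a \<times> (bool \<times> 'a) list \<Rightarrow> 'a \<times> (bool \<times> 'a) list" where
  "actL h x = (h \<otimes>\<^bsub>H\<^esub> fst x, snd x)"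

definition actE :: "bool \<Rightarrow> 'a \<times> (bool \<times> 'a) list \<Rightarrow> 'a \<times> (bool \<times> 'a) list" where
  "actE e x = (let c = part H (CC e) (fst x); r = rep H (CC e) (fst x) in
     if r = \<one>\<^bsub>H\<^esub> \<and> startsE (\<not> e) (snd x) then (th e c \<otimes>\<^bsub>H\<^esub> snd (hd (snd x)), tl (snd x))
     else (th e c, (e, r) # snd x))"

fun act :: "'a + bool \<Rightarrow> 'a \<times> (bool \<times> 'a) list \<Rightarrow> 'a \<times> (bool \<times> 'a) list" where
  "act (Inl h) x = actL h x" | "act (Inr e) x = actE e x"

lemma actL_XS: "h \<in> carrier H \<Longrightarrow> x \<in> XS \<Longrightarrow> actL h x \<in> XS"
  by (simp add: actL_def XS_def)

lemma actL_mult: "h1 \<in> carrier H \<Longrightarrow> h2 \<in> carrier H \<Longrightarrow> x \<in> XS \<Longrightarrow> actL h1 (actL h2 x) = actL (h1 \<otimes>\<^bsub>H\<^esub> h2) x"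
  by (simp add: actL_def XS_def G.m_assoc)

lemma actL_one: "x \<in> XS \<Longrightarrow> actL \<one>\<^bsub>H\<^esub> x = x"
  by (simp add: actL_def XS_def)

lemma XS_cases:
  assumes "x \<in> XS"
  obtains (Canc) h0 r1 l' where "x = (h0, (\<not> e, r1) # l')" "h0 \<in> CC e" "h0 \<in> carrier H"
     "r1 \<in> carrier H" "rep H (CC (\<not> e)) r1 = r1" "wfl l'" "\<not> (r1 = \<one>\<^bsub>H\<^esub> \<and> startsE e l')"
     "actE e x = (th e h0 \<otimes>\<^bsub>H\<^esub> r1, l')"
   | (Push) h0 l where "x = (h0, l)" "h0 \<in> carrier H" "wfl l"
     "\<not> (rep H (CC e) h0 = \<one>\<^bsub>H\<^esub> \<and> startsE (\<not> e) l)"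
     "actE e x = (th e (part H (CC e) h0), (e, rep H (CC e) h0) # l)"
proof -
  interpret tv H "CC e" by (rule tvC)
  obtain h0 l where x: "x = (h0, l)" "h0 \<in> carrier H" "wfl l" using assms by (cases x) (auto simp: XS_def)
  show ?thesis
  proof (cases "rep H (CC e) h0 = \<one>\<^bsub>H\<^esub> \<and> startsE (\<not> e) l")
    case True
    then obtain p l' where "l = p # l'" by (cases l) auto
    moreover obtain e' r1 where "p = (e', r1)" by fastforce
    ultimately have l: "l = (\<not> e, r1) # l'" using True by auto
    have "h0 \<in> CC e" using True rep_one_iff x(2) by blast
    then show ?thesis using Canc x l True part_of_in by (auto simp: actE_def Let_def)
  next
    case False
    then show ?thesis using Push x by (auto simp: actE_def Let_def)
  qed
qed

lemma actE_XS: assumes "x \<in> XS" shows "actE e x \<in> XS"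
  using assms
proof (cases rule: XS_cases[where e = e])
  case (Canc h0 r1 l')
  then show ?thesis using th_in[of h0 e] CC_carr by (simp add: XS_def G.m_closed)
next
  case (Push h0 l)
  interpret tv H "CC e" by (rule tvC)
  show ?thesis using Push th_in[OF part_in[OF Push(2)]] CC_carr rep_carr rep_idem
    by (simp add: XS_def)
qed

lemma actE_inv: assumes "x \<in> XS" shows "actE (\<not> e) (actE e x) = x"
  using assms
proof (cases rule: XS_cases[where e = e])
  case (Canc h0 r1 l')
  interpret tv H "CC (\<not> e)" by (rule tvC)
  have t: "th e h0 \<in> CC (\<not> e)" using th_in[OF Canc(2)] .
  have d: "rep H (CC (\<not> e)) (th e h0 \<otimes>\<^bsub>H\<^esub> r1) = r1" "part H (CC (\<not> e)) (th e h0 \<otimes>\<^bsub>H\<^esub> r1) = th e h0"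
    using decomp[OF t Canc(4,5)] by auto
  have "actE (\<not> e) (th e h0 \<otimes>\<^bsub>H\<^esub> r1, l') = (h0, (\<not> e, r1) # l')"
    using d th_th[OF Canc(2)] Canc(7) by (auto simp: actE_def Let_def)
  then show ?thesis using Canc(1,8) by simp
next
  case (Push h0 l)
  interpret tv H "CC e" by (rule tvC)
  have c: "part H (CC e) h0 \<in> CC e" using part_in[OF Push(2)] .
  have t: "th e (part H (CC e) h0) \<in> CC (\<not> e)" using th_in[OF c] .
  interpret t2: tv H "CC (\<not> e)" by (rule tvC)
  show ?thesis using Push t t2.rep_of_in[OF t] t2.part_of_in[OF t] th_th[OF c] part_rep[OF Push(2)]
    by (simp add: actE_def Let_def)
qed

lemma actE_conj:
  assumes "x \<in> XS" "a \<in> CC (\<not> e)"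
  shows "actE (\<not> e) (actL a (actE e x)) = actL (th (\<not> e) a) x"
  using assms(1)
proof (cases rule: XS_cases[where e = e])
  case (Canc h0 r1 l')
  interpret tv H "CC (\<not> e)" by (rule tvC)
  have t: "th e h0 \<in> CC (\<not> e)" using th_in[OF Canc(2)] .
  have at: "a \<otimes>\<^bsub>H\<^esub> th e h0 \<in> CC (\<not> e)" using C_mult[OF assms(2) t] .
  have eq: "a \<otimes>\<^bsub>H\<^esub> (th e h0 \<otimes>\<^bsub>H\<^esub> r1) = (a \<otimes>\<^bsub>H\<^esub> th e h0) \<otimes>\<^bsub>H\<^esub> r1"
    using assms(2) t Canc(4) CC_carr by (simp add: G.m_assoc)
  have d: "rep H (CC (\<not> e)) (a \<otimes>\<^bsub>H\<^esub> th e h0 \<otimes>\<^bsub>H\<^esub> r1) = r1"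
          "part H (CC (\<not> e)) (a \<otimes>\<^bsub>H\<^esub> th e h0 \<otimes>\<^bsub>H\<^esub> r1) = a \<otimes>\<^bsub>H\<^esub> th e h0"
    using decomp[OF at Canc(4,5)] by auto
  have m: "th (\<not> e) (a \<otimes>\<^bsub>H\<^esub> th e h0) = th (\<not> e) a \<otimes>\<^bsub>H\<^esub> h0"
    using th_mult[OF assms(2) t] th_th[OF Canc(2)] by simp
  have "actE (\<not> e) (actL a (th e h0 \<otimes>\<^bsub>H\<^esub> r1, l')) = (th (\<not> e) a \<otimes>\<^bsub>H\<^esub> h0, (\<not> e, r1) # l')"
    using d m eq Canc(7) by (auto simp: actE_def actL_def Let_def)
  then show ?thesis using Canc(1,8) by (simp add: actL_def)
next
  case (Push h0 l)
  interpret tv H "CC e" by (rule tvC)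
  have c: "part H (CC e) h0 \<in> CC e" using part_in[OF Push(2)] .
  have t: "th e (part H (CC e) h0) \<in> CC (\<not> e)" using th_in[OF c] .
  interpret t2: tv H "CC (\<not> e)" by (rule tvC)
  have at: "a \<otimes>\<^bsub>H\<^esub> th e (part H (CC e) h0) \<in> CC (\<not> e)" using t2.C_mult[OF assms(2) t] .
  have m: "th (\<not> e) (a \<otimes>\<^bsub>H\<^esub> th e (part H (CC e) h0)) = th (\<not> e) a \<otimes>\<^bsub>H\<^esub> part H (CC e) h0"
    using th_mult[OF assms(2) t] th_th[OF c] by simp
  have eq: "th (\<not> e) a \<otimes>\<^bsub>H\<^esub> part H (CC e) h0 \<otimes>\<^bsub>H\<^esub> rep H (CC e) h0 = th (\<not> e) a \<otimes>\<^bsub>H\<^esub> h0"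
    using part_rep[OF Push(2)] th_in[OF assms(2)] CC_carr c rep_carr[OF Push(2)]
    by (simp add: G.m_assoc)
  show ?thesis using Push at t2.rep_of_in[OF at] t2.part_of_in[OF at] m eq
    by (simp add: actE_def actL_def Let_def)
qed

end

locale hnnS = hnnl H A B \<phi> for H :: "('a,'c) monoid_scheme" and A B \<phi> +
  fixes SH :: "'a set" assumes SH_carr: "SH \<subseteq> carrier H" and A_SH: "A \<subseteq> SH" and B_SH: "B \<subseteq> SH"
begin

definition Lp :: "('a + bool) set" where "Lp = Inl ` SH \<union> Inr ` UNIV"
definition x0 :: "'a \<times> (bool \<times> 'a) list" where "x0 = (\<one>\<^bsub>H\<^esub>, [])"
definition reducible :: "('a + bool) list \<Rightarrow> bool" where
  "reducible w \<longleftrightarrow> (\<exists>w'. w' \<in> lists Lp \<and> length w' < length w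
      \<and> (\<forall>x\<in>XS. foldr act w' x = foldr act w x))"

lemma x0_XS: "x0 \<in> XS" by (simp add: x0_def XS_def)

lemma act_XS: "y \<in> Inl ` carrier H \<union> Inr ` UNIV \<Longrightarrow> x \<in> XS \<Longrightarrow> act y x \<in> XS"
  by (elim UnE imageE) (simp_all add: actL_XS actE_XS)

lemma Lp_gens: "Lp \<subseteq> Inl ` carrier H \<union> Inr ` UNIV"
  using SH_carr by (auto simp: Lp_def)

lemma fw_XS: "w \<in> lists Lp \<Longrightarrow> x \<in> XS \<Longrightarrow> foldr act w x \<in> XS"
proof (induction w)
  case (Cons y w)
  then have "y \<in> Inl ` carrier H \<union> Inr ` UNIV" "foldr act w x \<in> XS" using Lp_gens by auto
  then show ?case by (simp add: act_XS)
qed simp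

lemma fw_Inl: "hs \<in> lists (carrier H) \<Longrightarrow> x \<in> XS \<Longrightarrow> foldr act (map Inl hs) x = actL (word_prod H hs) x"
proof (induction hs)
  case Nil then show ?case by (simp add: word_prod_def actL_one)
next
  case (Cons h hs)
  then show ?case using actL_mult[of h "word_prod H hs" x] word_prod_carrier[OF G.is_monoid, of hs]
    by (simp add: word_prod_def)
qed

lemma red_prefix:
  assumes "reducible v" "u \<in> lists Lp" shows "reducible (u @ v)"
proof -
  obtain v' where v': "v' \<in> lists Lp" "length v' < length v" "\<forall>x\<in>XS. foldr act v' x = foldr act v x"
    using assms(1) by (auto simp: reducible_def)
  show ?thesis unfolding reducible_def
    by (rule exI[of _ "u @ v'"]) (use v' assms(2) in auto)
qed

lemma red_suffix:
  assumes "reducible u" "v \<in> lists Lp" shows "reducible (u @ v)"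
proof -
  obtain u' where u': "u' \<in> lists Lp" "length u' < length u" "\<forall>x\<in>XS. foldr act u' x = foldr act u x"
    using assms(1) by (auto simp: reducible_def)
  show ?thesis unfolding reducible_def
    by (rule exI[of _ "u' @ v"]) (use u' assms(2) fw_XS in auto)
qed

lemma split_word:
  "w \<in> lists Lp \<Longrightarrow> \<exists>hs v. w = map Inl hs @ v \<and> hs \<in> lists SH \<and>
      (v = [] \<or> (\<exists>e v'. v = Inr e # v' \<and> v' \<in> lists Lp))"
proof (induction w)
  case Nil then show ?case by auto
next
  case (Cons y w)
  then obtain hs v where hv: "w = map Inl hs @ v" "hs \<in> lists SH"
      "(v = [] \<or> (\<exists>e v'. v = Inr e # v' \<and> v' \<in> lists Lp))" by auto
  show ?case
  proof (cases y)
    case (Inl h)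
    then have "h \<in> SH" using Cons.prems by (auto simp: Lp_def)
    then show ?thesis using hv Inl by (intro exI[of _ "h # hs"] exI[of _ v]) auto
  next
    case (Inr e)
    then show ?thesis using Inr Cons.prems by (intro exI[of _ "[]"] exI[of _ "y # w"]) auto
  qed
qed

inductive irrT :: "('a + bool) list \<Rightarrow> bool" where
  irr1: "hs \<in> lists SH \<Longrightarrow> irrT (Inr e # map Inl hs)"
| irr2: "hs \<in> lists SH \<Longrightarrow> irrT (Inr e' # v) \<Longrightarrow> \<not> (e' = (\<not> e) \<and> word_prod H hs \<in> CC e)
          \<Longrightarrow> irrT (Inr e # map Inl hs @ Inr e' # v)"

lemma irr_Lp: "irrT v \<Longrightarrow> v \<in> lists Lp"
  by (induction rule: irrT.induct) (auto simp: Lp_def)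

lemma irr_act: "irrT v \<Longrightarrow> v = Inr e # rest \<Longrightarrow>
   \<exists>h0 r l. foldr act v x0 = (h0, (e, r) # l) \<and> h0 \<in> CC (\<not> e)"
proof (induction arbitrary: e rest rule: irrT.induct)
  case (irr1 hs e0)
  then have e: "e0 = e" by simp
  have hs: "hs \<in> lists (carrier H)" using irr1 SH_carr by auto
  have p: "word_prod H hs \<in> carrier H" using word_prod_carrier[OF G.is_monoid hs] .
  have y: "foldr act (map Inl hs) x0 = (word_prod H hs, [])"
    using fw_Inl[OF hs x0_XS] p by (simp add: actL_def x0_def)
  interpret tv H "CC e" by (rule tvC)
  have "actE e (word_prod H hs, []) = (th e (part H (CC e) (word_prod H hs)), [(e, rep H (CC e) (word_prod H hs))])"
    by (simp add: actE_def)
  then show ?case using y e th_in[OF part_in[OF p]] by simp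
next
  case (irr2 hs e' v e0)
  then have e: "e0 = e" by simp
  have hs: "hs \<in> lists (carrier H)" using irr2 SH_carr by auto
  have p: "word_prod H hs \<in> carrier H" using word_prod_carrier[OF G.is_monoid hs] .
  obtain h0 r l where IH: "foldr act (Inr e' # v) x0 = (h0, (e', r) # l)" "h0 \<in> CC (\<not> e')"
    using irr2.IH by blast
  have vX: "foldr act (Inr e' # v) x0 \<in> XS" using fw_XS[OF irr_Lp[OF irr2.hyps(2)] x0_XS] .
  have y: "foldr act (map Inl hs @ Inr e' # v) x0 = (word_prod H hs \<otimes>\<^bsub>H\<^esub> h0, (e', r) # l)"
    using fw_Inl[OF hs vX] IH(1) by (simp add: actL_def)
  have h0c: "h0 \<in> carrier H" using IH(2) CC_carr by blast
  interpret tv H "CC e" by (rule tvC)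
  have nc: "\<not> (rep H (CC e) (word_prod H hs \<otimes>\<^bsub>H\<^esub> h0) = \<one>\<^bsub>H\<^esub> \<and> startsE (\<not> e) ((e', r) # l))"
  proof
    assume a: "rep H (CC e) (word_prod H hs \<otimes>\<^bsub>H\<^esub> h0) = \<one>\<^bsub>H\<^esub> \<and> startsE (\<not> e) ((e', r) # l)"
    then have e': "e' = (\<not> e)" by simp
    then have h0C: "h0 \<in> CC e" using IH(2) by simp
    have "word_prod H hs \<otimes>\<^bsub>H\<^esub> h0 \<in> CC e" using a rep_one_iff p h0c by (simp add: G.m_closed)
    then have "word_prod H hs \<otimes>\<^bsub>H\<^esub> h0 \<otimes>\<^bsub>H\<^esub> inv\<^bsub>H\<^esub> h0 \<in> CC e" using C_mult C_inv h0C by blast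
    then have "word_prod H hs \<in> CC e" using p h0c by (simp add: G.m_assoc)
    then show False using irr2.hyps(3) e' e by simp
  qed
  have "actE e (word_prod H hs \<otimes>\<^bsub>H\<^esub> h0, (e', r) # l) =
     (th e (part H (CC e) (word_prod H hs \<otimes>\<^bsub>H\<^esub> h0)), (e, rep H (CC e) (word_prod H hs \<otimes>\<^bsub>H\<^esub> h0)) # (e', r) # l)"
    using nc by (simp add: actE_def Let_def del: startsE.simps)
  then have "foldr act (Inr e # map Inl hs @ Inr e' # v) x0 =
     (th e (part H (CC e) (word_prod H hs \<otimes>\<^bsub>H\<^esub> h0)), (e, rep H (CC e) (word_prod H hs \<otimes>\<^bsub>H\<^esub> h0)) # (e', r) # l)"
    using y by simp
  then show ?case using e th_in[OF part_in[OF G.m_closed[OF p h0c]]] by blast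
qed

lemma map_Inl_Lp: "hs \<in> lists SH \<Longrightarrow> map Inl hs \<in> lists Lp"
  by (auto simp: Lp_def)

lemma decomp:
  "v \<in> lists Lp \<Longrightarrow> \<exists>e rest. v = Inr e # rest \<Longrightarrow> reducible v \<or> irrT v"
proof (induction "length v" arbitrary: v rule: less_induct)
  case less
  obtain e rest where v: "v = Inr e # rest" using less.prems(2) by blast
  have rest: "rest \<in> lists Lp" using less.prems(1) v by auto
  obtain hs v' where hv: "rest = map Inl hs @ v'" "hs \<in> lists SH"
      "v' = [] \<or> (\<exists>e v''. v' = Inr e # v'' \<and> v'' \<in> lists Lp)"
    using split_word[OF rest] by blast
  have hsc: "hs \<in> lists (carrier H)" using hv(2) SH_carr by auto
  have p: "word_prod H hs \<in> carrier H" using word_prod_carrier[OF G.is_monoid hsc] .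
  show ?case
  proof (cases "v' = []")
    case True
    then show ?thesis using irr1[OF hv(2)] v hv(1) by simp
  next
    case False
    then obtain e' v'' where v': "v' = Inr e' # v''" "v'' \<in> lists Lp" using hv(3) by blast
    show ?thesis
    proof (cases "e' = (\<not> e) \<and> word_prod H hs \<in> CC e")
      case True
      let ?seg = "Inr e # map Inl hs @ [Inr e']"
      have pe: "word_prod H hs \<in> CC (\<not> \<not> e)" using True by simp
      have "reducible ?seg" unfolding reducible_def
      proof (intro exI[of _ "[Inl (th e (word_prod H hs))]"] conjI)
        have "th e (word_prod H hs) \<in> CC (\<not> e)" using th_in True by blast
        then have "th e (word_prod H hs) \<in> SH" using A_SH B_SH by (cases e) (auto simp: CC_def)
        then show "[Inl (th e (word_prod H hs))] \<in> lists Lp" by (auto simp: Lp_def)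
        show "length [Inl (th e (word_prod H hs))] < length ?seg" by simp
        show "\<forall>x\<in>XS. foldr act [Inl (th e (word_prod H hs))] x = foldr act ?seg x"
        proof
          fix x assume x: "x \<in> XS"
          have x1: "actE (\<not> e) x \<in> XS" using actE_XS[OF x] .
          have "foldr act ?seg x = actE e (actL (word_prod H hs) (actE (\<not> e) x))"
            using fw_Inl[OF hsc x1] True by simp
          also have "\<dots> = actL (th e (word_prod H hs)) x"
            using actE_conj[OF x pe] by simp
          finally show "foldr act [Inl (th e (word_prod H hs))] x = foldr act ?seg x" by simp
        qed
      qed
      then have "reducible (?seg @ v'')" using red_suffix v'(2) by blast
      then show ?thesis using v hv(1) v'(1) by simp
    next
      case pA: False
      have "length v' < length v" using v hv(1) by simp
      moreover have "v' \<in> lists Lp" using v' by (auto simp: Lp_def)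
      ultimately have "reducible v' \<or> irrT v'" using less.hyps v'(1) by blast
      then show ?thesis
      proof
        assume "reducible v'"
        moreover have "Inr e # map Inl hs \<in> lists Lp" using map_Inl_Lp[OF hv(2)] by (auto simp: Lp_def)
        ultimately have "reducible ((Inr e # map Inl hs) @ v')" by (rule red_prefix)
        then show ?thesis using v hv(1) by simp
      next
        assume "irrT v'"
        then show ?thesis using irr2[OF hv(2), of e' v'' e] pA v hv(1) v'(1) by simp
      qed
    qed
  qed
qed

lemma LBw:
  "w \<in> lists Lp \<Longrightarrow> h \<in> carrier H \<Longrightarrow> foldr act w x0 = actL h x0 \<Longrightarrow>
     \<exists>ss\<in>lists SH. length ss \<le> length w \<and> word_prod H ss = h"
proof (induction "length w" arbitrary: w rule: less_induct)
  case less
  obtain hs v where hv: "w = map Inl hs @ v" "hs \<in> lists SH"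
      "v = [] \<or> (\<exists>e v'. v = Inr e # v' \<and> v' \<in> lists Lp)"
    using split_word[OF less.prems(1)] by blast
  have hsc: "hs \<in> lists (carrier H)" using hv(2) SH_carr by auto
  have p: "word_prod H hs \<in> carrier H" using word_prod_carrier[OF G.is_monoid hsc] .
  show ?case
  proof (cases "v = []")
    case True
    have "w = map Inl hs" using hv(1) True by simp
    then have "actL (word_prod H hs) x0 = actL h x0" using less.prems(3) fw_Inl[OF hsc x0_XS] by simp
    then have "word_prod H hs = h" using p less.prems(2) by (simp add: actL_def x0_def)
    moreover have "length hs \<le> length w" using \<open>w = map Inl hs\<close> by simp
    ultimately show ?thesis using hv(2) by blast
  next
    case False
    then obtain e v' where v: "v = Inr e # v'" "v' \<in> lists Lp" using hv(3) by blast
    have vL: "v \<in> lists Lp" using v by (auto simp: Lp_def)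
    have "reducible v \<or> irrT v" using decomp[OF vL] v by blast
    then show ?thesis
    proof
      assume "reducible v"
      then have "reducible w" using red_prefix[OF _ map_Inl_Lp[OF hv(2)]] hv(1) by simp
      then obtain w' where w': "w' \<in> lists Lp" "length w' < length w"
          "\<forall>x\<in>XS. foldr act w' x = foldr act w x" by (auto simp: reducible_def)
      then have "foldr act w' x0 = actL h x0" using less.prems(3) x0_XS by simp
      then obtain ss where "ss \<in> lists SH" "length ss \<le> length w'" "word_prod H ss = h"
        using less.hyps[OF w'(2) w'(1) less.prems(2)] by blast
      then show ?thesis using w'(2) by (intro bexI[of _ ss]) auto
    next
      assume "irrT v"
      then obtain h0 r l where y: "foldr act v x0 = (h0, (e, r) # l)" using irr_act v by blast
      have "foldr act w x0 = actL (word_prod H hs) (h0, (e, r) # l)"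
        using hv(1) fw_Inl[OF hsc fw_XS[OF vL x0_XS]] y by simp
      then have "snd (foldr act w x0) \<noteq> []" by (simp add: actL_def)
      moreover have "snd (actL h x0) = []" by (simp add: actL_def x0_def)
      ultimately show ?thesis using less.prems(3) by simp
    qed
  qed
qed

end

context hnnl begin

abbreviation "YY \<equiv> hnn_gens H"
abbreviation "RR \<equiv> hnn_rel H A \<phi>"
abbreviation "cls \<equiv> \<lambda>u. pres_class YY RR u"

lemma A_carr: "a \<in> A \<Longrightarrow> a \<in> carrier H" using CC_carr[of a False] by (simp add: CC_def)
lemma B_carr: "a \<in> B \<Longrightarrow> a \<in> carrier H" using CC_carr[of a True] by (simp add: CC_def)

lemma Rok: "RR u v \<Longrightarrow> u \<in> lists YY \<and> v \<in> lists YY"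
  by (auto simp: hnn_rel_def hnn_gens_def G.m_closed A_carr B_carr phi_B image_iff)

fun ivT :: "'a + bool \<Rightarrow> 'a + bool" where
  "ivT (Inl h) = Inl (inv\<^bsub>H\<^esub> h)" | "ivT (Inr e) = Inr (\<not> e)"

lemma ivT_ok: "y \<in> YY \<Longrightarrow> ivT y \<in> YY \<and> cong_gen RR [ivT y, y] []"
proof -
  assume y: "y \<in> YY"
  show ?thesis
  proof (cases y)
    case (Inl h)
    then have h: "h \<in> carrier H" using y by (auto simp: hnn_gens_def)
    have "RR [Inl (inv\<^bsub>H\<^esub> h), Inl h] [Inl \<one>\<^bsub>H\<^esub>]" using h
      unfolding hnn_rel_def by (intro disjI1 bexI[of _ "inv\<^bsub>H\<^esub> h"] bexI[of _ h]) auto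
    moreover have "RR [Inl \<one>\<^bsub>H\<^esub>] []" by (simp add: hnn_rel_def)
    ultimately show ?thesis using Inl h by (auto simp: hnn_gens_def intro: cong_gen.base cong_gen.trans)
  next
    case (Inr e)
    have "RR [Inr (\<not> e), Inr e] []" by (cases e) (simp_all add: hnn_rel_def)
    then show ?thesis using Inr by (auto simp: hnn_gens_def intro: cong_gen.base)
  qed
qed

lemma G_group: "group (hnn H A \<phi>)"
  unfolding hnn_def by (rule presented_group[OF ivT_ok])

lemma Ract: "RR u v \<Longrightarrow> x \<in> XS \<Longrightarrow> foldr act u x = foldr act v x"
proof -
  assume r: "RR u v" and x: "x \<in> XS"
  have c1: "actE True (actE False x) = x" using actE_inv[OF x, of False] by simp
  have c2: "actE False (actE True x) = x" using actE_inv[OF x, of True] by simp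
  have c3: "actE False (actL a (actE True x)) = actL (\<phi> a) x" if "a \<in> A" for a
    using actE_conj[OF x, of a True] that by (simp add: CC_def th_def)
  show ?thesis using r x c1 c2 c3 unfolding hnn_rel_def
    by (auto simp: actL_mult actL_one)
qed

lemma act_XS': "y \<in> YY \<Longrightarrow> x \<in> XS \<Longrightarrow> act y x \<in> XS"
  unfolding hnn_gens_def by (elim UnE imageE) (simp_all add: actL_XS actE_XS)

lemma cls_mult_H: "x \<in> carrier H \<Longrightarrow> y \<in> carrier H \<Longrightarrow>
   cls [Inl (x \<otimes>\<^bsub>H\<^esub> y)] = cls [Inl x] \<otimes>\<^bsub>hnn H A \<phi>\<^esub> cls [Inl y]"
proof -
  assume xy: "x \<in> carrier H" "y \<in> carrier H"
  have "RR [Inl x, Inl y] [Inl (x \<otimes>\<^bsub>H\<^esub> y)]" using xy unfolding hnn_rel_def by blast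
  then have "cls [Inl x, Inl y] = cls [Inl (x \<otimes>\<^bsub>H\<^esub> y)]"
    using xy by (subst cls_eq_iff) (auto simp: hnn_gens_def G.m_closed intro: cong_gen.base)
  then show ?thesis using presented_mult[of "[Inl x]" YY "[Inl y]" RR] xy
    by (simp add: hnn_def hnn_gens_def)
qed

lemma cls_one_H: "cls [Inl \<one>\<^bsub>H\<^esub>] = \<one>\<^bsub>hnn H A \<phi>\<^esub>"
proof -
  have "RR [Inl \<one>\<^bsub>H\<^esub>] []" by (simp add: hnn_rel_def)
  then have "cls [Inl \<one>\<^bsub>H\<^esub>] = cls []"
    by (subst cls_eq_iff) (auto simp: hnn_gens_def intro: cong_gen.base)
  then show ?thesis by (simp add: hnn_def presented_one)
qed

end

lemma hnn_case:
  fixes H :: "('a,'c) monoid_scheme"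
  assumes "group H" "finitely_generated H"
    "subgroup A H" "subgroup B H" "finite A" "finite B"
    "\<phi> \<in> iso (H\<lparr>carrier := A\<rparr>) (H\<lparr>carrier := B\<rparr>)"
  shows "\<exists>SH SG. finite SH \<and> SH \<subseteq> carrier H \<and> generate H SH = carrier H
               \<and> (\<forall>s\<in>SH. inv\<^bsub>H\<^esub> s \<in> SH)
               \<and> finite SG \<and> SG \<subseteq> carrier (hnn H A \<phi>) \<and> generate (hnn H A \<phi>) SG = carrier (hnn H A \<phi>)
               \<and> (\<forall>s\<in>SG. inv\<^bsub>hnn H A \<phi>\<^esub> s \<in> SG)
               \<and> hnn_incl H A \<phi> ` SH \<subseteq> SG
               \<and> (\<forall>h1\<in>carrier H. \<forall>h2\<in>carrier H.
                    word_dist H SH h1 h2 = word_dist (hnn H A \<phi>) SG (hnn_incl H A \<phi> h1) (hnn_incl H A \<phi> h2))"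
proof -
  interpret hnnl H A B \<phi> using assms by (simp add: hnnl_def)
  obtain S0 where S0: "finite S0" "S0 \<subseteq> carrier H" "generate H S0 = carrier H"
    using assms(2) by (auto simp: finitely_generated_def)
  define SH where "SH = S0 \<union> (\<lambda>s. inv\<^bsub>H\<^esub> s) ` S0 \<union> (A \<union> B)"
  have E: "finite (A \<union> B)" "A \<union> B \<subseteq> carrier H" "\<forall>e\<in>A \<union> B. inv\<^bsub>H\<^esub> e \<in> A \<union> B"
    using assms(5,6) A_carr B_carr subgroup.m_inv_closed[OF assms(3)] subgroup.m_inv_closed[OF assms(4)]
    by auto
  have SH: "finite SH" "SH \<subseteq> carrier H" "\<forall>s\<in>SH. inv\<^bsub>H\<^esub> s \<in> SH" "generate H SH = carrier H" "A \<union> B \<subseteq> SH"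
    using good_SH[OF assms(1) S0 E] unfolding SH_def by auto
  interpret hnnS H A B \<phi> SH using SH by (simp add: hnnS_def hnnS_axioms_def hnnl_axioms)
  let ?G = "hnn H A \<phi>"
  let ?\<iota> = "hnn_incl H A \<phi>"
  define Y0 where "Y0 = Inl ` SH \<union> Inr ` (UNIV :: bool set)"
  define SG where "SG = (\<lambda>y. cls [y]) ` Y0"
  have Y0Y: "Y0 \<subseteq> YY" using SH by (auto simp: Y0_def hnn_gens_def)
  have Y0Lp: "Y0 \<subseteq> Lp" by (auto simp: Y0_def Lp_def)
  have grp: "group ?G" by (rule G_group)
  have carrG: "carrier ?G = cls ` lists YY" by (simp add: hnn_def presented_carrier)
  have SGc: "SG \<subseteq> carrier ?G" using Y0Y by (auto simp: SG_def carrG)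
  have iv: "inv\<^bsub>?G\<^esub> (cls [y]) = cls [ivT y]" if "y \<in> YY" for y
    unfolding hnn_def by (rule presented_inv[OF ivT_ok that])
  have SGinv: "\<forall>s\<in>SG. inv\<^bsub>?G\<^esub> s \<in> SG"
  proof
    fix s assume "s \<in> SG"
    then obtain y where y: "y \<in> Y0" "s = cls [y]" by (auto simp: SG_def)
    then have "ivT y \<in> Y0" using SH by (cases y) (auto simp: Y0_def)
    then show "inv\<^bsub>?G\<^esub> s \<in> SG" using y iv Y0Y by (auto simp: SG_def)
  qed
  have genH: "cls [Inl h] \<in> generate ?G SG" if "h \<in> carrier H" for h
  proof -
    have "h \<in> generate H SH" using that SH by simp
    then show ?thesis
    proof (rule gen_transfer[where g = "\<lambda>h. cls [Inl h]"])
      show "cls [Inl \<one>\<^bsub>H\<^esub>] \<in> generate ?G SG" by (simp add: cls_one_H generate.one)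
      show "cls [Inl s] \<in> generate ?G SG" if "s \<in> SH" for s
        using that by (auto simp: SG_def Y0_def intro!: generate.incl)
      show "cls [Inl (inv\<^bsub>H\<^esub> s)] \<in> generate ?G SG" if "s \<in> SH" for s
        using that SH(3) by (auto simp: SG_def Y0_def intro!: generate.incl)
      show "cls [Inl (x \<otimes>\<^bsub>H\<^esub> y)] = cls [Inl x] \<otimes>\<^bsub>?G\<^esub> cls [Inl y]"
        if "x \<in> generate H SH" "y \<in> generate H SH" for x y
        using that SH(4) cls_mult_H by simp
    qed
  qed
  have genG: "generate ?G SG = carrier ?G"
    unfolding hnn_def
  proof (rule presented_generate)
    show "group (presented YY RR)" using grp by (simp add: hnn_def)
    show "SG \<subseteq> carrier (presented YY RR)" using SGc by (simp add: hnn_def)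
    fix y assume "y \<in> YY"
    moreover have "cls [Inr e] \<in> generate ?G SG" for e
      by (auto simp: SG_def Y0_def intro!: generate.incl)
    ultimately show "cls [y] \<in> generate (presented YY RR) SG"
      using genH by (auto simp: hnn_gens_def hnn_def)
  qed
  have incl: "?\<iota> ` SH \<subseteq> SG" by (auto simp: SG_def Y0_def hnn_incl_def)
  have hom: "?\<iota> \<in> hom H ?G"
  proof (rule homI)
    fix x assume "x \<in> carrier H"
    then show "?\<iota> x \<in> carrier ?G" by (auto simp: carrG hnn_incl_def hnn_gens_def)
  next
    fix x y assume "x \<in> carrier H" "y \<in> carrier H"
    then show "?\<iota> (x \<otimes>\<^bsub>H\<^esub> y) = ?\<iota> x \<otimes>\<^bsub>?G\<^esub> ?\<iota> y" by (simp add: hnn_incl_def cls_mult_H)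
  qed
  have LB: "\<exists>ss\<in>lists SH. length ss \<le> length ws \<and> word_prod H ss = h"
    if ws: "ws \<in> lists SG" and h: "h \<in> carrier H" and e: "word_prod ?G ws = ?\<iota> h" for ws h
  proof -
    obtain w where w: "w \<in> lists Y0" "ws = map (\<lambda>y. cls [y]) w"
      using ws lists_image[of "\<lambda>y. cls [y]" Y0] by (auto simp: SG_def)
    have wY: "w \<in> lists YY" using w(1) Y0Y by auto
    have "cls w = cls [Inl h]"
      using e presented_word_prod[OF wY, of RR] w(2) by (simp add: hnn_def hnn_incl_def)
    then have "cong_gen RR w [Inl h]" using wY h by (subst (asm) cls_eq_iff) (auto simp: hnn_gens_def)
    then have "\<forall>x\<in>XS. foldr act w x = foldr act [Inl h] x"
      using act_cong[of RR YY XS act, OF Rok act_XS' Ract _ wY] by blast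
    then have "foldr act w x0 = actL h x0" using x0_XS by simp
    moreover have "length w = length ws" using w(2) by simp
    ultimately show ?thesis using LBw[of w h] w(1) Y0Lp h by auto
  qed
  have dist: "\<forall>h1\<in>carrier H. \<forall>h2\<in>carrier H. word_dist H SH h1 h2 = word_dist ?G SG (?\<iota> h1) (?\<iota> h2)"
    using transfer_dist[OF assms(1) grp SH(2,3,4) hom incl LB] by blast
  have fin: "finite SG" using SH(1) by (simp add: SG_def Y0_def)
  show ?thesis
    using SH SGc genG SGinv incl dist fin
    by (intro exI[of _ SH] exI[of _ SG]) auto
qed

theorem lemma3p2:
  fixes H :: "('a,'c) monoid_scheme" and K :: "('k,'d) monoid_scheme"
  assumes "group H" and "finitely_generated H"
  shows
   "(\<forall>(A::'a set) (B::'k set) (\<phi>::'a \<Rightarrow> 'k).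
       group K \<and> finitely_generated K \<and> subgroup A H \<and> subgroup B K \<and> finite A \<and> finite B
       \<and> \<phi> \<in> iso (H\<lparr>carrier := A\<rparr>) (K\<lparr>carrier := B\<rparr>)
       \<longrightarrow> (let G = amalg H K A \<phi>; \<iota> = amalg_incl H K A \<phi> in
            (\<exists>SH SG. finite SH \<and> SH \<subseteq> carrier H \<and> generate H SH = carrier H
               \<and> (\<forall>s\<in>SH. inv\<^bsub>H\<^esub> s \<in> SH)
               \<and> finite SG \<and> SG \<subseteq> carrier G \<and> generate G SG = carrier G
               \<and> (\<forall>s\<in>SG. inv\<^bsub>G\<^esub> s \<in> SG)
               \<and> \<iota> ` SH \<subseteq> SG
               \<and> (\<forall>h1\<in>carrier H. \<forall>h2\<in>carrier H.
                    word_dist H SH h1 h2 = word_dist G SG (\<iota> h1) (\<iota> h2)))))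
    \<and> (\<forall>(A::'a set) (B::'a set) (\<phi>::'a \<Rightarrow> 'a).
       subgroup A H \<and> subgroup B H \<and> finite A \<and> finite B
       \<and> \<phi> \<in> iso (H\<lparr>carrier := A\<rparr>) (H\<lparr>carrier := B\<rparr>)
       \<longrightarrow> (let G = hnn H A \<phi>; \<iota> = hnn_incl H A \<phi> in
            (\<exists>SH SG. finite SH \<and> SH \<subseteq> carrier H \<and> generate H SH = carrier H
               \<and> (\<forall>s\<in>SH. inv\<^bsub>H\<^esub> s \<in> SH)
               \<and> finite SG \<and> SG \<subseteq> carrier G \<and> generate G SG = carrier G
               \<and> (\<forall>s\<in>SG. inv\<^bsub>G\<^esub> s \<in> SG)
               \<and> \<iota> ` SH \<subseteq> SG
               \<and> (\<forall>h1\<in>carrier H. \<forall>h2\<in>carrier H.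
                    word_dist H SH h1 h2 = word_dist G SG (\<iota> h1) (\<iota> h2)))))"
proof (intro conjI allI impI)
  fix A :: "'a set" and B :: "'k set" and \<phi> :: "'a \<Rightarrow> 'k"
  assume "group K \<and> finitely_generated K \<and> subgroup A H \<and> subgroup B K \<and> finite A \<and> finite B
       \<and> \<phi> \<in> iso (H\<lparr>carrier := A\<rparr>) (K\<lparr>carrier := B\<rparr>)"
  then show "let G = amalg H K A \<phi>; \<iota> = amalg_incl H K A \<phi> in
            (\<exists>SH SG. finite SH \<and> SH \<subseteq> carrier H \<and> generate H SH = carrier H
               \<and> (\<forall>s\<in>SH. inv\<^bsub>H\<^esub> s \<in> SH)
               \<and> finite SG \<and> SG \<subseteq> carrier G \<and> generate G SG = carrier G
               \<and> (\<forall>s\<in>SG. inv\<^bsub>G\<^esub> s \<in> SG)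
               \<and> \<iota> ` SH \<subseteq> SG
               \<and> (\<forall>h1\<in>carrier H. \<forall>h2\<in>carrier H.
                    word_dist H SH h1 h2 = word_dist G SG (\<iota> h1) (\<iota> h2)))"
    unfolding Let_def using amalg_case[OF assms] by blast
next
  fix A :: "'a set" and B :: "'a set" and \<phi> :: "'a \<Rightarrow> 'a"
  assume "subgroup A H \<and> subgroup B H \<and> finite A \<and> finite B
       \<and> \<phi> \<in> iso (H\<lparr>carrier := A\<rparr>) (H\<lparr>carrier := B\<rparr>)"
  then show "let G = hnn H A \<phi>; \<iota> = hnn_incl H A \<phi> in
            (\<exists>SH SG. finite SH \<and> SH \<subseteq> carrier H \<and> generate H SH = carrier H
               \<and> (\<forall>s\<in>SH. inv\<^bsub>H\<^esub> s \<in> SH)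
               \<and> finite SG \<and> SG \<subseteq> carrier G \<and> generate G SG = carrier G
               \<and> (\<forall>s\<in>SG. inv\<^bsub>G\<^esub> s \<in> SG)
               \<and> \<iota> ` SH \<subseteq> SG
               \<and> (\<forall>h1\<in>carrier H. \<forall>h2\<in>carrier H.
                    word_dist H SH h1 h2 = word_dist G SG (\<iota> h1) (\<iota> h2)))"
    unfolding Let_def using hnn_case[OF assms] by blast
qed


end
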